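(* Under the setting where $d\ge 1$, $1\le q\le d$, $\mathbf{w}_1,\dots,\mathbf{w}_q$ are independent and uniformly distributed on $S^{d-1}$, $\{\mathbf{u}_1,\dots,\mathbf{u}_q\}$ is their Gram–Schmidt orthonormalization, $\mathbf{g}\in\mathbb{R}^d$ is fixed and nonzero, and $\mathbf{v}_t:=\frac{1}{\sqrt q}\sum_{i=1}^q\operatorname{sign}(\mathbf{g}^\top\mathbf{u}_i)\mathbf{u}_i$, the random vector $$g_2:=\frac{d}{\frac{2}{\pi}(q-1)+1}\,(\mathbf{g}^\top\mathbf{v}_t)\,\mathbf{v}_t$$ satisfies $\mathbb{E}[g_2]=\mathbf{g}$, i.e. it is an unbiased estimator of $\mathbf{g}$.
   Context: $\operatorname{sign}(a)=+1$ if $a>0$, $-1$ if $a<0$. Note $\|\mathbf{v}_t\|=1$ since the $\mathbf{u}_i$ are orthonormal. *)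

theory Defs
  imports "HOL-Probability.Probability"
begin

text \<open>Uniform (normalized surface) probability measure on the unit sphere S^{d-1}
  of a Euclidean space: the radial projection of the uniform distribution on the
  open unit ball (the cone-measure definition of the normalized surface measure).\<close>
definition unif_sphere :: "('a::euclidean_space) measure" where
  "unif_sphere = distr (uniform_measure lborel (ball 0 1)) borel (\<lambda>x. x /\<^sub>R norm x)"

fun gs_list :: "(nat \<Rightarrow> 'a::real_inner) \<Rightarrow> nat \<Rightarrow> 'a list" where
  "gs_list w 0 = []"
| "gs_list w (Suc k) =
     (let us = gs_list w k;
          r = w k - (\<Sum>u\<leftarrow>us. (w k \<bullet> u) *\<^sub>R u)
      in us @ [r /\<^sub>R norm r])"

text \<open>The i-th Gram-Schmidt vector u_i (0-based indexing).\<close>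
definition gram_schmidt :: "(nat \<Rightarrow> 'a::real_inner) \<Rightarrow> nat \<Rightarrow> 'a" where
  "gram_schmidt w i = gs_list w (Suc i) ! i"

definition vt :: "nat \<Rightarrow> 'a::real_inner \<Rightarrow> (nat \<Rightarrow> 'a) \<Rightarrow> 'a" where
  "vt q g w = (1 / sqrt (real q)) *\<^sub>R (\<Sum>i<q. sgn (g \<bullet> gram_schmidt w i) *\<^sub>R gram_schmidt w i)"

definition g2_est :: "nat \<Rightarrow> nat \<Rightarrow> 'a::real_inner \<Rightarrow> (nat \<Rightarrow> 'a) \<Rightarrow> 'a" where
  "g2_est d q g w =
     (real d / ((2 / pi) * (real q - 1) + 1) * (g \<bullet> vt q g w)) *\<^sub>R vt q g w"

end

theory Submission
  imports Defs
begin

lemma lborel_orth_wo: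
  fixes g :: "real^('m::{finite,wellorder}) \<Rightarrow> real^('m::{finite,wellorder})"
  assumes g: "orthogonal_transformation g"
  shows "distr lborel borel g = lborel"
proof (rule lborel_eqI[symmetric])
  have lin: "linear g" using g by (rule orthogonal_transformation_linear)
  have gm: "g \<in> borel_measurable borel"
    using lin by (intro borel_measurable_continuous_onI linear_continuous_on) (simp add: linear_conv_bounded_linear)
  have ig: "orthogonal_transformation (inv g)" using g by (rule orthogonal_transformation_inv)
  fix l u :: "real^('m::{finite,wellorder})"
  assume le: "\<And>b. b \<in> Basis \<Longrightarrow> l \<bullet> b \<le> u \<bullet> b"
  have pre: "g -` box l u = inv g ` box l u"
    using orthogonal_transformation_bij[OF g] by (simp add: bij_vimage_eq_inv_image)
  have bm: "g -` box l u \<in> sets lborel" using gm by (simp add: measurable_sets_borel)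
  have lm: "box l u \<in> lmeasurable" by simp
  have "emeasure (distr lborel borel g) (box l u) = emeasure lborel (g -` box l u)"
    using gm by (simp add: emeasure_distr)
  also have "\<dots> = emeasure lebesgue (g -` box l u)"
    using bm by (simp add: emeasure_completion)
  also have "\<dots> = ennreal (measure lebesgue (inv g ` box l u))"
    unfolding pre using measurable_orthogonal_image[OF ig lm]
    by (simp add: emeasure_eq_measure2)
  also have "\<dots> = ennreal (measure lebesgue (box l u))"
    using measure_orthogonal_image[OF ig lm] by simp
  also have "\<dots> = emeasure lborel (box l u)"
    using lm by (simp add: emeasure_eq_measure2 emeasure_completion)
  also have "\<dots> = (\<Prod>b\<in>Basis. (u - l) \<bullet> b)"
    using le by (simp add: emeasure_lborel_box_eq)
  finally show "emeasure (distr lborel borel g) (box l u) = (\<Prod>b\<in>Basis. (u - l) \<bullet> b)" .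
qed simp

typedef 'a wo = "UNIV :: 'a set" by auto

instance wo :: (finite) finite
proof
  have "(UNIV :: 'a wo set) = Abs_wo ` UNIV"
    by (metis Abs_wo_cases surj_def)
  moreover have "finite (Abs_wo ` (UNIV :: 'a set))" by simp
  ultimately show "finite (UNIV :: 'a wo set)" by simp
qed

instantiation wo :: (finite) wellorder
begin
definition less_eq_wo :: "'a wo \<Rightarrow> 'a wo \<Rightarrow> bool" where
  "less_eq_wo x y \<longleftrightarrow> to_nat (Rep_wo x) \<le> to_nat (Rep_wo y)"
definition less_wo :: "'a wo \<Rightarrow> 'a wo \<Rightarrow> bool" where
  "less_wo x y \<longleftrightarrow> to_nat (Rep_wo x) < to_nat (Rep_wo y)"
instance
proof
  fix x y z :: "'a wo"
  show "(x < y) = (x \<le> y \<and> \<not> y \<le> x)" by (auto simp: less_eq_wo_def less_wo_def)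
  show "x \<le> x" by (simp add: less_eq_wo_def)
  show "x \<le> y \<Longrightarrow> y \<le> z \<Longrightarrow> x \<le> z" by (simp add: less_eq_wo_def)
  show "x \<le> y \<Longrightarrow> y \<le> x \<Longrightarrow> x = y"
    by (metis less_eq_wo_def Rep_wo_inject inj_to_nat injD le_antisym)
  show "x \<le> y \<or> y \<le> x" by (auto simp: less_eq_wo_def)
next
  fix P :: "'a wo \<Rightarrow> bool" and a :: "'a wo"
  assume step: "\<And>x. (\<And>y. y < x \<Longrightarrow> P y) \<Longrightarrow> P x"
  have "\<forall>x. to_nat (Rep_wo x) = n \<longrightarrow> P x" for n
  proof (induction n rule: less_induct)
    case (less n)
    show ?case
    proof (intro allI impI)
      fix x :: "'a wo" assume "to_nat (Rep_wo x) = n"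
      show "P x"
      proof (rule step)
        fix y assume "y < x"
        then have "to_nat (Rep_wo y) < n" using \<open>to_nat (Rep_wo x) = n\<close> by (simp add: less_wo_def)
        then show "P y" using less.IH by blast
      qed
    qed
  qed
  then show "P a" by blast
qed
end

definition vPhi :: "real^'n \<Rightarrow> real^('n wo)" where
  "vPhi x = (\<chi> j. x $ Rep_wo j)"
definition vPsi :: "real^('n wo) \<Rightarrow> real^'n" where
  "vPsi y = (\<chi> i. y $ Abs_wo i)"

lemma vPsi_vPhi[simp]: "vPsi (vPhi x) = x"
  by (simp add: vPsi_def vPhi_def Abs_wo_inverse vec_eq_iff)
lemma vPhi_vPsi[simp]: "vPhi (vPsi y) = y"
  by (simp add: vPsi_def vPhi_def Rep_wo_inverse vec_eq_iff)

lemma linear_vPhi: "linear vPhi"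
  by (rule linearI) (simp_all add: vPhi_def vec_eq_iff)
lemma linear_vPsi: "linear vPsi"
  by (rule linearI) (simp_all add: vPsi_def vec_eq_iff)

lemma sum_wo_reindex: "(\<Sum>j\<in>UNIV. h (Rep_wo j)) = (\<Sum>i\<in>UNIV. h i)"
proof -
  have "bij_betw Rep_wo UNIV UNIV"
    by (metis Rep_wo_inject UNIV_I bij_betw_def inj_on_def type_definition.Rep_range type_definition_wo)
  then show ?thesis by (rule sum.reindex_bij_betw)
qed
lemma prod_wo_reindex: "(\<Prod>j\<in>UNIV. h (Rep_wo j)) = (\<Prod>i\<in>UNIV. h i)"
proof -
  have "bij_betw Rep_wo UNIV UNIV"
    by (metis Rep_wo_inject UNIV_I bij_betw_def inj_on_def type_definition.Rep_range type_definition_wo)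
  then show ?thesis by (rule prod.reindex_bij_betw)
qed

lemma inner_vPsi: "vPsi x \<bullet> vPsi y = x \<bullet> y"
proof -
  have "vPsi x \<bullet> vPsi y = (\<Sum>i\<in>UNIV. x $ Abs_wo i * y $ Abs_wo i)"
    by (simp add: inner_vec_def vPsi_def)
  also have "\<dots> = (\<Sum>j\<in>UNIV. x $ Abs_wo (Rep_wo j) * y $ Abs_wo (Rep_wo j))"
    by (rule sum_wo_reindex[symmetric])
  also have "\<dots> = x \<bullet> y" by (simp add: inner_vec_def Rep_wo_inverse)
  finally show ?thesis .
qed

lemma inner_vPhi: "vPhi x \<bullet> vPhi y = x \<bullet> y"
  by (metis inner_vPsi vPsi_vPhi)

lemma prod_Basis_vec: "(\<Prod>b\<in>Basis. (x::real^'n) \<bullet> b) = (\<Prod>i\<in>UNIV. x $ i)"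
proof -
  have B: "(Basis :: (real^'n) set) = (\<lambda>i. axis i 1) ` UNIV"
    by (auto simp: Basis_vec_def)
  have "inj (\<lambda>i::'n. axis i (1::real))"
    by (auto simp: inj_on_def axis_eq_axis)
  then show ?thesis unfolding B by (simp add: prod.reindex inner_axis)
qed

lemma lborel_vPsi: "distr lborel borel vPsi = (lborel :: (real^'n) measure)"
proof (rule lborel_eqI[symmetric])
  have gm: "vPsi \<in> borel_measurable borel"
    using linear_vPsi by (intro borel_measurable_continuous_onI linear_continuous_on) (simp add: linear_conv_bounded_linear)
  fix l u :: "real^'n"
  assume le: "\<And>b. b \<in> Basis \<Longrightarrow> l \<bullet> b \<le> u \<bullet> b"
  have pre: "vPsi -` box l u = box (vPhi l) (vPhi u)"
  proof -
    have allw: "(\<forall>j. P (Rep_wo j) j) \<longleftrightarrow> (\<forall>i. P i (Abs_wo i))" for P :: "'n \<Rightarrow> 'n wo \<Rightarrow> bool"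
      by (metis Abs_wo_inverse Rep_wo_inverse UNIV_I)
    have "y \<in> box (vPhi l) (vPhi u) \<longleftrightarrow> (\<forall>i. l $ i < y $ Abs_wo i \<and> y $ Abs_wo i < u $ i)" for y :: "real^('n wo)"
      unfolding mem_box_cart vPhi_def vec_lambda_beta
      using allw[of "\<lambda>i j. l $ i < y $ j \<and> y $ j < u $ i"] by simp
    then show ?thesis by (auto simp: mem_box_cart vPsi_def)
  qed
  have lei: "l $ i \<le> u $ i" for i
    using le[of "axis i 1"] by (simp add: inner_axis)
  have le2: "vPhi l \<bullet> b \<le> vPhi u \<bullet> b" if b: "b \<in> Basis" for b
  proof -
    obtain j where bj: "b = axis j 1" using b by (auto simp: Basis_vec_def)
    show ?thesis using lei[of "Rep_wo j"] by (simp add: bj inner_axis vPhi_def)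
  qed
  have "emeasure (distr lborel borel vPsi) (box l u) = emeasure lborel (box (vPhi l) (vPhi u))"
    using gm by (subst emeasure_distr) (simp_all add: pre)
  also have "\<dots> = (\<Prod>b\<in>Basis. (vPhi u - vPhi l) \<bullet> b)"
    using le2 by (simp add: emeasure_lborel_box_eq)
  also have "\<dots> = (\<Prod>j\<in>UNIV. (u - l) $ Rep_wo j)"
    by (simp add: prod_Basis_vec vPhi_def)
  also have "\<dots> = (\<Prod>b\<in>Basis. (u - l) \<bullet> b)"
    using prod_wo_reindex[of "\<lambda>i. (u - l) $ i"] by (simp add: prod_Basis_vec)
  finally show "emeasure (distr lborel borel vPsi) (box l u) = (\<Prod>b\<in>Basis. (u - l) \<bullet> b)" .
qed simp

lemma orth_borel_measurable:
  fixes f :: "'a::euclidean_space \<Rightarrow> 'a"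
  assumes "orthogonal_transformation f" shows "f \<in> borel_measurable borel"
  using orthogonal_transformation_linear[OF assms]
  by (intro borel_measurable_continuous_onI linear_continuous_on) (simp add: linear_conv_bounded_linear)

lemma lborel_orth:
  fixes f :: "real^'n \<Rightarrow> real^'n"
  assumes f: "orthogonal_transformation f"
  shows "distr lborel borel f = lborel"
proof -
  define g where "g = vPhi \<circ> f \<circ> vPsi"
  have og: "orthogonal_transformation g"
    unfolding orthogonal_transformation_def g_def
    using f linear_vPhi linear_vPsi
    by (auto intro!: linear_compose simp: orthogonal_transformation_def inner_vPhi inner_vPsi)
  have fg: "f \<circ> vPsi = vPsi \<circ> g" by (auto simp: g_def)
  have mPsi: "vPsi \<in> borel_measurable borel"
    using linear_vPsi by (intro borel_measurable_continuous_onI linear_continuous_on) (simp add: linear_conv_bounded_linear)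
  have mf: "f \<in> borel_measurable borel" by (rule orth_borel_measurable[OF f])
  have mg: "g \<in> borel_measurable borel" by (rule orth_borel_measurable[OF og])
  have "distr lborel borel f = distr (distr lborel borel vPsi) borel f"
    by (simp add: lborel_vPsi)
  also have "\<dots> = distr lborel borel (f \<circ> vPsi)"
    by (subst distr_distr) (simp_all add: mf mPsi)
  also have "\<dots> = distr lborel borel (vPsi \<circ> g)" by (simp add: fg)
  also have "\<dots> = distr (distr lborel borel g) borel vPsi"
    by (subst distr_distr) (simp_all add: mg mPsi)
  also have "\<dots> = lborel" using lborel_orth_wo[OF og] lborel_vPsi by simp
  finally show ?thesis .
qed


definition Hs :: "real \<Rightarrow> real" where "Hs x = (LBINT t=ereal 0..ereal x. \<bar>sin t\<bar>)"

lemma DERIV_Hs: "(Hs has_real_derivative \<bar>sin x\<bar>) (at x)"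
proof -
  have "(at x within {min 0 (x - 1)..max 0 (x + 1)}) = at x"
    by (intro at_within_interior) auto
  moreover have "min 0 (x - 1) \<le> x" "x \<le> max 0 (x + 1)"
    by auto
  moreover have "continuous_on {min 0 (x - 1)..max 0 (x + 1)} (\<lambda>t. \<bar>sin t\<bar>)"
    by (intro continuous_intros)
  ultimately show ?thesis
    using interval_integral_FTC2[of "min 0 (x - 1)" 0 "max 0 (x + 1)" "\<lambda>t. \<bar>sin t\<bar>" x]
    by (auto simp: Hs_def[abs_def] zero_ereal_def has_real_derivative_iff_has_vector_derivative
             split del: if_split)
qed

lemma Hs_0: "Hs 0 = 0" by (simp add: Hs_def)

lemma Hs_pi: "Hs pi = 2"
proof -
  have "(LBINT t=ereal 0..ereal pi. \<bar>sin t\<bar>) = (- cos pi) - (- cos 0)"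
  proof (rule interval_integral_FTC_finite)
    show "continuous_on {min 0 pi..max 0 pi} (\<lambda>t. \<bar>sin t\<bar>)" by (intro continuous_intros)
    fix x assume x: "min 0 pi \<le> x" "x \<le> max 0 pi"
    then have "sin x \<ge> 0" by (intro sin_ge_zero) auto
    then have "\<bar>sin x\<bar> = sin x" by simp
    then show "((\<lambda>t. - cos t) has_vector_derivative \<bar>sin x\<bar>) (at x within {min 0 pi..max 0 pi})"
      by (auto intro!: derivative_eq_intros simp: has_real_derivative_iff_has_vector_derivative[symmetric])
  qed
  then show ?thesis by (simp add: Hs_def)
qed

lemma Hs_shift: "Hs (x + pi) = Hs x + 2"
proof -
  have "\<exists>c. \<forall>x\<in>UNIV. Hs (x + pi) - Hs x = c"
  proof (rule has_field_derivative_zero_constant)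
    fix x :: real
    have d1: "((\<lambda>x. x + pi) has_real_derivative 1) (at x)" by (auto intro!: derivative_eq_intros)
    have "((\<lambda>x. Hs (x + pi) - Hs x) has_real_derivative (\<bar>sin (x + pi)\<bar> * 1 - \<bar>sin x\<bar>)) (at x)"
      by (intro derivative_intros DERIV_chain2[OF DERIV_Hs d1] DERIV_Hs)
    then show "((\<lambda>x. Hs (x + pi) - Hs x) has_real_derivative 0) (at x within UNIV)"
      by (simp add: sin_add)
  qed simp
  then obtain c where c: "\<And>x. Hs (x + pi) - Hs x = c" by blast
  from c[of 0] have "c = 2" by (simp add: Hs_0 Hs_pi)
  with c[of x] show ?thesis by simp
qed

lemma LBINT_abs_sin_shift: "(LBINT t=0..4*pi. \<bar>sin (t + a)\<bar>) = 8"
proof -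
  have "(LBINT t=ereal 0..ereal (4*pi). \<bar>sin (t + a)\<bar>) = Hs (4*pi + a) - Hs (0 + a)"
  proof (rule interval_integral_FTC_finite)
    show "continuous_on {min 0 (4*pi)..max 0 (4*pi)} (\<lambda>t. \<bar>sin (t + a)\<bar>)" by (intro continuous_intros)
    fix x :: real
    have d1: "((\<lambda>x. x + a) has_real_derivative 1) (at x)" by (auto intro!: derivative_eq_intros)
    have "((\<lambda>t. Hs (t + a)) has_real_derivative (\<bar>sin (x + a)\<bar> * 1)) (at x)"
      by (rule DERIV_chain2[OF DERIV_Hs d1])
    then show "((\<lambda>t. Hs (t + a)) has_vector_derivative \<bar>sin (x + a)\<bar>) (at x within {min 0 (4*pi)..max 0 (4*pi)})"
      by (simp add: has_real_derivative_iff_has_vector_derivative[symmetric] has_field_derivative_at_within)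
  qed
  also have "Hs (4*pi + a) = Hs a + 8"
    using Hs_shift[of a] Hs_shift[of "a + pi"] Hs_shift[of "a + 2*pi"] Hs_shift[of "a + 3*pi"]
    by (simp add: algebra_simps)
  finally show ?thesis by (simp add: zero_ereal_def)
qed

lemma K_formula:
  "(LBINT t=0..4*pi. \<bar>(cos (t/2) * a - sin (t/2) * b) * (sin (t/2) * a + cos (t/2) * b)\<bar>) = 4 * (a\<^sup>2 + b\<^sup>2)"
proof (cases "a\<^sup>2 + b\<^sup>2 = 0")
  case True
  then have "a = 0" "b = 0" by (auto simp: add_nonneg_eq_0_iff)
  then show ?thesis by simp
next
  case False
  define r where "r = sqrt (a\<^sup>2 + b\<^sup>2)"
  have r0: "r > 0" using False by (simp add: r_def add_pos_nonneg sum_power2_gt_zero_iff)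
  have rr: "r\<^sup>2 = a\<^sup>2 + b\<^sup>2" by (simp add: r_def)
  have "(a / r)\<^sup>2 + (b / r)\<^sup>2 = 1" using r0 rr False by (simp add: power_divide add_divide_distrib[symmetric])
  then obtain p where p: "a / r = cos p" "b / r = sin p"
    using sincos_total_2pi by metis
  have ab: "a = r * cos p" "b = r * sin p" using p r0 by (auto simp: field_simps)
  have eq: "\<bar>(cos (t/2) * a - sin (t/2) * b) * (sin (t/2) * a + cos (t/2) * b)\<bar> = (r\<^sup>2 / 2) * \<bar>sin (t + 2 * p)\<bar>" for t
  proof -
    have "(cos (t/2) * a - sin (t/2) * b) * (sin (t/2) * a + cos (t/2) * b) = r\<^sup>2 * (cos (t/2 + p) * sin (t/2 + p))"
      by (simp add: ab cos_add sin_add power2_eq_square algebra_simps)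
    also have "\<dots> = (r\<^sup>2 / 2) * sin (t + 2 * p)"
      using sin_double[of "t/2 + p"] by (simp add: algebra_simps)
    finally have "(cos (t/2) * a - sin (t/2) * b) * (sin (t/2) * a + cos (t/2) * b) = (r\<^sup>2 / 2) * sin (t + 2 * p)" .
    then have "\<bar>(cos (t/2) * a - sin (t/2) * b) * (sin (t/2) * a + cos (t/2) * b)\<bar> = \<bar>(r\<^sup>2 / 2) * sin (t + 2 * p)\<bar>"
      by (rule arg_cong)
    then show ?thesis by (simp only: abs_mult) simp
  qed
  have "(LBINT t=0..4*pi. \<bar>(cos (t/2) * a - sin (t/2) * b) * (sin (t/2) * a + cos (t/2) * b)\<bar>)
      = (LBINT t=0..4*pi. (r\<^sup>2 / 2) * \<bar>sin (t + 2 * p)\<bar>)"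
    by (simp only: eq)
  also have "\<dots> = (r\<^sup>2 / 2) * (LBINT t=0..4*pi. \<bar>sin (t + 2 * p)\<bar>)"
    by (rule interval_lebesgue_integral_mult_right)
  also have "\<dots> = 4 * r\<^sup>2" by (simp add: LBINT_abs_sin_shift)
  finally show ?thesis by (simp add: rr)
qed


definition U0 :: "('a::euclidean_space) measure" where
  "U0 = uniform_measure lborel (ball 0 1)"

definition nz :: "'a::real_normed_vector \<Rightarrow> 'a" where "nz x = x /\<^sub>R norm x"

lemma nz_meas[measurable]: "nz \<in> borel_measurable (borel :: ('a::euclidean_space) measure)"
  unfolding nz_def by measurable

lemma ball_pos: "emeasure lborel (ball (0::'a::euclidean_space) 1) \<noteq> 0"
proof -
  have "0 < unit_ball_vol (real DIM('a))" by (rule unit_ball_vol_pos) simp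
  then have "unit_ball_vol (real DIM('a)) \<noteq> 0" by linarith
  then show ?thesis by (simp add: emeasure_ball)
qed

lemma ball_fin: "emeasure lborel (ball (0::'a::euclidean_space) 1) \<noteq> \<infinity>"
  using emeasure_lborel_ball_finite by (metis less_irrefl)

lemma prob_U0: "prob_space (U0 :: ('a::euclidean_space) measure)"
  unfolding U0_def by (rule prob_space_uniform_measure[OF ball_pos ball_fin])

lemma sets_U0[simp, measurable_cong]: "sets (U0 :: ('a::euclidean_space) measure) = sets borel"
  by (simp add: U0_def)

lemma space_U0[simp]: "space (U0 :: ('a::euclidean_space) measure) = UNIV"
  by (simp add: U0_def)

lemma unif_sphere_nz: "unif_sphere = distr U0 borel nz"
  by (simp add: unif_sphere_def U0_def nz_def[abs_def])

lemma sets_unif_sphere[simp, measurable_cong]: "sets (unif_sphere :: ('a::euclidean_space) measure) = sets borel"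
  by (simp add: unif_sphere_def)

lemma space_unif_sphere[simp]: "space (unif_sphere :: ('a::euclidean_space) measure) = UNIV"
  by (simp add: unif_sphere_def)

lemma prob_unif_sphere: "prob_space (unif_sphere :: ('a::euclidean_space) measure)"
  unfolding unif_sphere_nz by (intro prob_space.prob_space_distr prob_U0) simp

lemma AE_U0_nonzero: "AE x in (U0 :: ('a::euclidean_space) measure). x \<noteq> 0"
proof -
  have "emeasure U0 {0::'a} = 0"
    unfolding U0_def by (subst emeasure_uniform_measure) auto
  then show ?thesis
    by (intro AE_I[of _ _ "{0}"]) (auto simp: U0_def)
qed

lemma AE_unif_sphere_norm: "AE z in (unif_sphere :: ('a::euclidean_space) measure). norm z = 1"
proof -
  have "AE x in (U0 :: 'a measure). norm (nz x) = 1"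
    using AE_U0_nonzero by eventually_elim (simp add: nz_def)
  then show ?thesis
    unfolding unif_sphere_nz by (subst AE_distr_iff) auto
qed

lemma U0_orth:
  fixes f :: "real^'n \<Rightarrow> real^'n"
  assumes f: "orthogonal_transformation f"
  shows "distr U0 borel f = U0"
proof (rule measure_eqI)
  show "sets (distr U0 borel f) = sets U0" by simp
  have mf: "f \<in> borel_measurable borel" by (rule orth_borel_measurable[OF f])
  fix A :: "(real^'n) set" assume "A \<in> sets (distr U0 borel f)"
  then have A: "A \<in> sets borel" by simp
  have fb: "f -` ball 0 1 = ball 0 1"
    using orthogonal_transformation_norm[OF f] by auto
  have pre: "f -` (ball 0 1 \<inter> A) = ball 0 1 \<inter> f -` A"
    using fb by auto
  have "emeasure (distr U0 borel f) A = emeasure U0 (f -` A)"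
    using mf A by (subst emeasure_distr) (auto simp: U0_def)
  also have "\<dots> = emeasure lborel (ball 0 1 \<inter> f -` A) / emeasure lborel (ball (0::real^'n) 1)"
    unfolding U0_def using mf A by (subst emeasure_uniform_measure) (auto simp: measurable_sets_borel)
  also have "emeasure lborel (ball 0 1 \<inter> f -` A) = emeasure (distr lborel borel f) (ball 0 1 \<inter> A)"
    using mf A by (subst emeasure_distr) (auto simp: vimage_Int fb)
  also have "\<dots> = emeasure lborel (ball 0 1 \<inter> A)" by (simp add: lborel_orth[OF f])
  also have "emeasure lborel (ball 0 1 \<inter> A) / emeasure lborel (ball (0::real^'n) 1) = emeasure U0 A"
    unfolding U0_def using A by (subst emeasure_uniform_measure) auto
  finally show "emeasure (distr U0 borel f) A = emeasure U0 A" .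
qed

lemma unif_sphere_orth:
  fixes f :: "real^'n \<Rightarrow> real^'n"
  assumes f: "orthogonal_transformation f"
  shows "distr unif_sphere borel f = unif_sphere"
proof -
  have mf: "f \<in> borel_measurable borel" by (rule orth_borel_measurable[OF f])
  have mf0: "f \<in> borel_measurable U0" using mf by (simp cong: measurable_cong_sets)
  have comm: "f \<circ> nz = nz \<circ> f"
    by (auto simp: nz_def orthogonal_transformation_norm[OF f] orthogonal_transformation_scaleR[OF f])
  have "distr unif_sphere borel f = distr (distr U0 borel nz) borel f" by (simp add: unif_sphere_nz)
  also have "\<dots> = distr U0 borel (f \<circ> nz)"
    by (subst distr_distr) (simp_all add: mf mf0)
  also have "\<dots> = distr U0 borel (nz \<circ> f)" by (simp add: comm)
  also have "\<dots> = distr (distr U0 borel f) borel nz"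
    by (subst distr_distr) (simp_all add: mf mf0)
  also have "\<dots> = unif_sphere" by (simp add: U0_orth[OF f] unif_sphere_nz)
  finally show ?thesis .
qed

lemma unif_sphere_subspace_null:
  fixes A V :: "('a::euclidean_space) set"
  assumes A: "A \<in> sets borel" and AV: "A \<subseteq> V" and V: "subspace V" and d: "dim V < DIM('a)"
  shows "emeasure unif_sphere A = 0"
proof -
  have sub: "nz -` A \<subseteq> V"
  proof
    fix x assume x: "x \<in> nz -` A"
    show "x \<in> V"
    proof (cases "x = 0")
      case True then show ?thesis using V by (simp add: subspace_0)
    next
      case False
      have "nz x \<in> V" using x AV by auto
      then have "norm x *\<^sub>R nz x \<in> V" using V by (intro subspace_mul)
      then show ?thesis using False by (simp add: nz_def)
    qed
  qed
  have negV: "negligible V" using d by (rule negligible_lowdim)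
  have "negligible (ball 0 1 \<inter> nz -` A)"
    using negligible_subset[OF negV] sub by blast
  moreover have "ball 0 1 \<inter> nz -` A \<in> sets lborel"
    using A by (auto intro!: measurable_sets_borel[OF nz_meas])
  ultimately have "emeasure lborel (ball 0 1 \<inter> nz -` A) = 0"
  proof -
    assume n: "negligible (ball 0 1 \<inter> nz -` A)" and sb: "ball 0 1 \<inter> nz -` A \<in> sets lborel"
    from n have "emeasure lebesgue (ball 0 1 \<inter> nz -` A) = 0"
      unfolding negligible_iff_null_sets by auto
    then show ?thesis using sb by (simp add: emeasure_completion)
  qed
  then have "emeasure U0 (nz -` A) = 0"
    unfolding U0_def using A by (subst emeasure_uniform_measure) (auto intro!: measurable_sets_borel[OF nz_meas])
  then show ?thesis
    unfolding unif_sphere_nz using A by (subst emeasure_distr) auto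
qed


lemma integrable_sphere_bounded:
  fixes h :: "'a::euclidean_space \<Rightarrow> 'b::{banach, second_countable_topology}"
  assumes hm: "h \<in> borel_measurable borel" and hb: "\<And>z. norm z = 1 \<Longrightarrow> norm (h z) \<le> B"
  shows "integrable unif_sphere h"
proof -
  interpret prob_space "unif_sphere :: 'a measure" by (rule prob_unif_sphere)
  show ?thesis
  proof (rule integrable_const_bound[where B=B])
    show "AE x in unif_sphere. norm (h x) \<le> B"
      using AE_unif_sphere_norm by eventually_elim (rule hb)
    show "h \<in> borel_measurable unif_sphere" using hm by (simp cong: measurable_cong_sets)
  qed
qed

lemma integral_unif_sphere_orth:
  fixes f :: "real^'n \<Rightarrow> real^'n" and h :: "real^'n \<Rightarrow> real"
  assumes f: "orthogonal_transformation f" and hm: "h \<in> borel_measurable borel"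
  shows "(\<integral>z. h (f z) \<partial>unif_sphere) = (\<integral>z. h z \<partial>unif_sphere)"
proof -
  have mf: "f \<in> unif_sphere \<rightarrow>\<^sub>M borel"
    using orth_borel_measurable[OF f] by (simp cong: measurable_cong_sets)
  have "(\<integral>z. h z \<partial>distr unif_sphere borel f) = (\<integral>z. h (f z) \<partial>unif_sphere)"
    by (rule integral_distr[OF mf hm])
  then show ?thesis by (simp add: unif_sphere_orth[OF f])
qed

lemma orth_inner_pre:
  assumes f: "orthogonal_transformation f" and fu: "f u' = u"
  shows "f z \<bullet> u = z \<bullet> u'"
proof -
  have "f z \<bullet> f u' = z \<bullet> u'" using f unfolding orthogonal_transformation_def by blast
  then show ?thesis by (simp only: fu)
qed

lemma sphere_sq:
  fixes u :: "real^'n"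
  assumes u: "norm u = 1"
  shows "(\<integral>z. (z \<bullet> u)\<^sup>2 \<partial>unif_sphere) = 1 / real CARD('n)"
proof -
  interpret prob_space "unif_sphere :: (real^'n) measure" by (rule prob_unif_sphere)
  define J where "J w = (\<integral>z. (z \<bullet> w)\<^sup>2 \<partial>(unif_sphere :: (real^'n) measure))" for w :: "real^'n"
  have inv: "J w = J w'" if w: "norm w = 1" and w': "norm w' = 1" for w w' :: "real^'n"
  proof -
    obtain f where f: "orthogonal_transformation f" and fw: "f w' = w"
      using orthogonal_transformation_exists_1[OF w' w] by blast
    have "J w = (\<integral>z. (f z \<bullet> w)\<^sup>2 \<partial>unif_sphere)"
      unfolding J_def by (rule integral_unif_sphere_orth[OF f, symmetric]) simp
    also have "\<dots> = J w'" unfolding J_def by (simp add: orth_inner_pre[OF f fw])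
    finally show ?thesis .
  qed
  have intg: "integrable unif_sphere (\<lambda>z. (z \<bullet> w)\<^sup>2)" for w :: "real^'n"
  proof (rule integrable_sphere_bounded[where B="(norm w)\<^sup>2"])
    fix z :: "real^'n" assume z1: "norm z = 1"
    have "\<bar>z \<bullet> w\<bar> \<le> norm w" using Cauchy_Schwarz_ineq2[of z w] z1 by simp
    then have "\<bar>z \<bullet> w\<bar>\<^sup>2 \<le> (norm w)\<^sup>2" by (intro power_mono) auto
    then show "norm ((z \<bullet> w)\<^sup>2) \<le> (norm w)\<^sup>2" by simp
  qed simp
  have "(\<Sum>i\<in>UNIV. J (axis i 1)) = (\<integral>z. (\<Sum>i\<in>UNIV. (z \<bullet> axis i 1)\<^sup>2) \<partial>(unif_sphere :: (real^'n) measure))"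
    unfolding J_def by (subst Bochner_Integration.integral_sum) (simp_all add: intg)
  also have "\<dots> = (\<integral>z. 1 \<partial>(unif_sphere :: (real^'n) measure))"
  proof (rule integral_cong_AE)
    show "AE z in (unif_sphere :: (real^'n) measure). (\<Sum>i\<in>UNIV. (z \<bullet> axis i 1)\<^sup>2) = 1"
      using AE_unif_sphere_norm
    proof eventually_elim
      fix z :: "real^'n" assume "norm z = 1"
      then have "z \<bullet> z = 1" by (simp add: norm_eq_sqrt_inner)
      have e: "(z \<bullet> axis i 1) = z $ i" for i by (simp add: inner_axis)
      have "z \<bullet> z = (\<Sum>i\<in>UNIV. z $ i * z $ i)" by (simp add: inner_vec_def)
      then show "(\<Sum>i\<in>UNIV. (z \<bullet> axis i 1)\<^sup>2) = 1"
        using \<open>z \<bullet> z = 1\<close> by (simp add: e power2_eq_square)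
    qed
  qed simp_all
  also have "\<dots> = 1" using prob_space by (simp add: prob_space_def)
  finally have s: "(\<Sum>i\<in>UNIV. J (axis i 1)) = 1" .
  have "(\<Sum>i\<in>UNIV. J (axis i 1)) = (\<Sum>i\<in>(UNIV::'n set). J u)"
    by (intro sum.cong refl inv) (simp_all add: u)
  then have "real CARD('n) * J u = 1" using s by simp
  then show ?thesis unfolding J_def by (simp add: field_simps)
qed


definition rotuv :: "'a::real_inner \<Rightarrow> 'a \<Rightarrow> real \<Rightarrow> 'a \<Rightarrow> 'a" where
  "rotuv u v t z = z + (cos t - 1) *\<^sub>R ((z \<bullet> u) *\<^sub>R u + (z \<bullet> v) *\<^sub>R v) + sin t *\<^sub>R ((z \<bullet> u) *\<^sub>R v - (z \<bullet> v) *\<^sub>R u)"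

lemma rotuv_u:
  assumes "u \<bullet> u = 1" "v \<bullet> v = 1" "u \<bullet> v = 0"
  shows "rotuv u v t z \<bullet> u = cos t * (z \<bullet> u) - sin t * (z \<bullet> v)"
  using assms by (simp add: rotuv_def inner_add_left inner_diff_left inner_commute[of v u] algebra_simps)

lemma rotuv_v:
  assumes "u \<bullet> u = 1" "v \<bullet> v = 1" "u \<bullet> v = 0"
  shows "rotuv u v t z \<bullet> v = sin t * (z \<bullet> u) + cos t * (z \<bullet> v)"
  using assms by (simp add: rotuv_def inner_add_left inner_diff_left inner_commute[of v u] algebra_simps)

lemma rotuv_orth:
  assumes uu: "u \<bullet> u = 1" and vv: "v \<bullet> v = 1" and uv: "u \<bullet> v = 0"
  shows "orthogonal_transformation (rotuv u v t)"
  unfolding orthogonal_transformation_def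
proof (intro conjI allI)
  show "linear (rotuv u v t)"
    by (rule linearI) (simp_all add: rotuv_def inner_add_left scaleR_add_right scaleR_diff_right algebra_simps)
  fix x y :: 'a
  define c where "c = cos t"
  define s where "s = sin t"
  have cs: "s * s = 1 - c * c" unfolding c_def s_def using sin_cos_squared_add[of t] by (simp add: power2_eq_square)
  have vu: "v \<bullet> u = 0" using uv by (simp add: inner_commute)
  show "rotuv u v t x \<bullet> rotuv u v t y = x \<bullet> y"
    unfolding rotuv_def c_def[symmetric] s_def[symmetric]
    apply (simp add: inner_add_left inner_add_right inner_diff_left inner_diff_right uu vv uv vu)
    apply (simp add: inner_commute[of u] inner_commute[of v] algebra_simps)
    using cs by algebra
qed

lemma inner_sq_le1:
  fixes z u :: "'a::real_inner"
  assumes "norm z = 1" "u \<bullet> u = 1"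
  shows "(z \<bullet> u)\<^sup>2 \<le> 1"
proof -
  have nu: "norm u = 1" using assms(2) by (simp add: norm_eq_sqrt_inner)
  have "\<bar>z \<bullet> u\<bar> \<le> 1" using Cauchy_Schwarz_ineq2[of z u] assms(1) nu by simp
  then have "\<bar>z \<bullet> u\<bar>\<^sup>2 \<le> 1\<^sup>2" by (intro power_mono) auto
  then show ?thesis by simp
qed

lemma sphere_abs:
  fixes u v :: "real^'n"
  assumes uu: "u \<bullet> u = 1" and vv: "v \<bullet> v = 1" and uv: "u \<bullet> v = 0"
  shows "(\<integral>z. \<bar>z \<bullet> u\<bar> * \<bar>z \<bullet> v\<bar> \<partial>unif_sphere) = 2 / (pi * real CARD('n))"
proof -
  interpret P: prob_space "unif_sphere :: (real^'n) measure" by (rule prob_unif_sphere)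
  have psf: "pair_sigma_finite (unif_sphere :: (real^'n) measure) lborel"
    by (simp add: pair_sigma_finite_def P.sigma_finite_measure_axioms lborel.sigma_finite_measure_axioms)
  define I where "I = (\<integral>z. \<bar>z \<bullet> u\<bar> * \<bar>z \<bullet> v\<bar> \<partial>(unif_sphere :: (real^'n) measure))"
  define F where "F z t = \<bar>(cos (t/2) * (z \<bullet> u) - sin (t/2) * (z \<bullet> v)) * (sin (t/2) * (z \<bullet> u) + cos (t/2) * (z \<bullet> v))\<bar>"
    for z :: "real^'n" and t :: real
  define G where "G z t = F z t * indicator {0..4*pi} t" for z :: "real^'n" and t :: real
  have Ft: "(\<integral>z. F z t \<partial>unif_sphere) = I" for t
  proof -
    have "F z t = \<bar>rotuv u v (t/2) z \<bullet> u\<bar> * \<bar>rotuv u v (t/2) z \<bullet> v\<bar>" for z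
      unfolding F_def rotuv_u[OF uu vv uv] rotuv_v[OF uu vv uv] by (simp add: abs_mult)
    then have "(\<integral>z. F z t \<partial>unif_sphere) = (\<integral>z. \<bar>rotuv u v (t/2) z \<bullet> u\<bar> * \<bar>rotuv u v (t/2) z \<bullet> v\<bar> \<partial>unif_sphere)"
      by simp
    also have "\<dots> = I" unfolding I_def
      by (rule integral_unif_sphere_orth[OF rotuv_orth[OF uu vv uv], of "\<lambda>z. \<bar>z \<bullet> u\<bar> * \<bar>z \<bullet> v\<bar>"]) simp
    finally show ?thesis .
  qed
  have LG: "(\<integral>t. G z t \<partial>lborel) = 4 * ((z \<bullet> u)\<^sup>2 + (z \<bullet> v)\<^sup>2)" for z
  proof -
    have "(LBINT t=ereal 0..ereal (4*pi). F z t) = 4 * ((z \<bullet> u)\<^sup>2 + (z \<bullet> v)\<^sup>2)"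
      unfolding F_def using K_formula[of "z \<bullet> u" "z \<bullet> v"] by (simp add: zero_ereal_def)
    moreover have "(LBINT t=ereal 0..ereal (4*pi). F z t) = (\<integral>t. G z t \<partial>lborel)"
      by (subst interval_integral_Icc) (simp_all add: set_lebesgue_integral_def G_def[abs_def] mult.commute)
    ultimately show ?thesis by simp
  qed
  have Gm: "(\<lambda>(z, t). G z t) \<in> borel_measurable ((unif_sphere :: (real^'n) measure) \<Otimes>\<^sub>M lborel)"
  proof -
    have "(\<lambda>(z, t). G z t) \<in> borel_measurable ((borel :: (real^'n) measure) \<Otimes>\<^sub>M lborel)"
      unfolding G_def F_def by measurable
    then show ?thesis
      by (subst measurable_cong_sets[OF sets_pair_measure_cong[OF sets_unif_sphere refl] refl])
  qed
  have intG: "integrable ((unif_sphere :: (real^'n) measure) \<Otimes>\<^sub>M lborel) (\<lambda>(z, t). G z t)"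
  proof (rule pair_sigma_finite.Fubini_integrable[OF psf Gm])
    have "(\<lambda>z. \<integral>t. norm (case (z, t) of (z, t) \<Rightarrow> G z t) \<partial>lborel) = (\<lambda>z. 4 * ((z \<bullet> u)\<^sup>2 + (z \<bullet> v)\<^sup>2))"
    proof
      fix z
      have "G z t \<ge> 0" for t by (simp add: G_def F_def)
      then show "(\<integral>t. norm (case (z, t) of (z, t) \<Rightarrow> G z t) \<partial>lborel) = 4 * ((z \<bullet> u)\<^sup>2 + (z \<bullet> v)\<^sup>2)"
        using LG[of z] by simp
    qed
    moreover have "integrable unif_sphere (\<lambda>z::real^'n. 4 * ((z \<bullet> u)\<^sup>2 + (z \<bullet> v)\<^sup>2))"
    proof (rule integrable_sphere_bounded[where B=8])
      fix z :: "real^'n" assume "norm z = 1"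
      then have "(z \<bullet> u)\<^sup>2 \<le> 1" "(z \<bullet> v)\<^sup>2 \<le> 1" using inner_sq_le1 uu vv by blast+
      then show "norm (4 * ((z \<bullet> u)\<^sup>2 + (z \<bullet> v)\<^sup>2)) \<le> 8" by simp
    qed simp
    ultimately show "integrable unif_sphere (\<lambda>z. \<integral>t. norm (case (z, t) of (z, t) \<Rightarrow> G z t) \<partial>lborel)"
      by simp
    show "AE z in unif_sphere. integrable lborel (\<lambda>t. case (z, t) of (z, t) \<Rightarrow> G z t)"
    proof (rule AE_I2)
      fix z :: "real^'n"
      show "integrable lborel (\<lambda>t. case (z, t) of (z, t) \<Rightarrow> G z t)"
        unfolding G_def F_def by simp (intro borel_integrable_atLeastAtMost continuous_intros; simp)
    qed
  qed
  have "(\<integral>t. (\<integral>z. G z t \<partial>unif_sphere) \<partial>lborel) = (\<integral>z. (\<integral>t. G z t \<partial>lborel) \<partial>(unif_sphere :: (real^'n) measure))"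
    using pair_sigma_finite.Fubini_integral[OF psf intG] by simp
  also have "\<dots> = (\<integral>z. 4 * ((z \<bullet> u)\<^sup>2 + (z \<bullet> v)\<^sup>2) \<partial>(unif_sphere :: (real^'n) measure))"
    by (simp add: LG)
  also have "\<dots> = 8 / real CARD('n)"
  proof -
    have nu: "norm u = 1" "norm v = 1" using uu vv by (simp_all add: norm_eq_sqrt_inner)
    have iu: "integrable unif_sphere (\<lambda>z::real^'n. (z \<bullet> w)\<^sup>2)" if "w \<bullet> w = 1" for w
    proof (rule integrable_sphere_bounded[where B=1])
      fix z :: "real^'n" assume "norm z = 1"
      then show "norm ((z \<bullet> w)\<^sup>2) \<le> 1" using inner_sq_le1 that by simp
    qed simp
    have "(\<integral>z. 4 * ((z \<bullet> u)\<^sup>2 + (z \<bullet> v)\<^sup>2) \<partial>(unif_sphere :: (real^'n) measure))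
        = 4 * ((\<integral>z. (z \<bullet> u)\<^sup>2 \<partial>unif_sphere) + (\<integral>z. (z \<bullet> v)\<^sup>2 \<partial>(unif_sphere :: (real^'n) measure)))"
      using iu[OF uu] iu[OF vv] by simp
    also have "\<dots> = 8 / real CARD('n)" using sphere_sq[OF nu(1)] sphere_sq[OF nu(2)] by simp
    finally show ?thesis .
  qed
  finally have A: "(\<integral>t. (\<integral>z. G z t \<partial>unif_sphere) \<partial>lborel) = 8 / real CARD('n)" .
  have "(\<integral>t. (\<integral>z. G z t \<partial>(unif_sphere :: (real^'n) measure)) \<partial>lborel) = (\<integral>t. I * indicator {0..4*pi} t \<partial>lborel)"
    by (simp add: G_def Ft)
  also have "\<dots> = I * (4 * pi)" by simp
  finally have "I * (4 * pi) = 8 / real CARD('n)" using A by simp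
  then show ?thesis unfolding I_def[symmetric] by (simp add: field_simps)
qed


lemma length_gs_list[simp]: "length (gs_list w k) = k"
  by (induction k) (simp_all add: Let_def)

lemma gs_list_nth_Suc: "j < k \<Longrightarrow> gs_list w (Suc k) ! j = gs_list w k ! j"
  by (simp add: Let_def nth_append)

lemma gs_list_nth: "j < k \<Longrightarrow> gs_list w k ! j = gram_schmidt w j"
proof (induction k)
  case 0 then show ?case by simp
next
  case (Suc k)
  show ?case
  proof (cases "j < k")
    case True then show ?thesis by (simp only: gs_list_nth_Suc[OF True] Suc.IH[OF True])
  next
    case False then have "j = k" using Suc.prems by simp
    then show ?thesis by (simp add: gram_schmidt_def)
  qed
qed

lemma sum_list_map_nth: "(\<Sum>u\<leftarrow>xs. h u) = (\<Sum>j<length xs. h (xs ! j))"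
  by (simp add: sum_list_sum_nth atLeast0LessThan)

definition gs_res :: "(nat \<Rightarrow> 'a::real_inner) \<Rightarrow> nat \<Rightarrow> 'a" where
  "gs_res w k = w k - (\<Sum>j<k. (w k \<bullet> gram_schmidt w j) *\<^sub>R gram_schmidt w j)"

lemma gs_rec: "gram_schmidt w k = gs_res w k /\<^sub>R norm (gs_res w k)"
proof -
  have "(\<Sum>u\<leftarrow>gs_list w k. (w k \<bullet> u) *\<^sub>R u) = (\<Sum>j<k. (w k \<bullet> gram_schmidt w j) *\<^sub>R gram_schmidt w j)"
    by (simp add: sum_list_map_nth gs_list_nth)
  then show ?thesis
    by (simp add: gram_schmidt_def Let_def nth_append gs_res_def)
qed

lemma gs_local:
  assumes "\<And>j. j \<le> k \<Longrightarrow> w j = w' j"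
  shows "gram_schmidt w k = gram_schmidt w' k"
  using assms
proof (induction k arbitrary: rule: less_induct)
  case (less k)
  have "gram_schmidt w j = gram_schmidt w' j" if "j < k" for j
    using less that by simp
  then have "gs_res w k = gs_res w' k"
    using less.prems by (simp add: gs_res_def)
  then show ?case by (simp add: gs_rec)
qed

lemma gs_orth_equiv:
  assumes f: "orthogonal_transformation f"
  shows "gram_schmidt (\<lambda>i. f (w i)) k = f (gram_schmidt w k)"
proof (induction k rule: less_induct)
  case (less k)
  have lin: "linear f" using f by (rule orthogonal_transformation_linear)
  have ip: "f x \<bullet> f y = x \<bullet> y" for x y using f by (simp add: orthogonal_transformation_def)
  have "gs_res (\<lambda>i. f (w i)) k = f (w k) - (\<Sum>j<k. (f (w k) \<bullet> f (gram_schmidt w j)) *\<^sub>R f (gram_schmidt w j))"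
    using less by (simp add: gs_res_def)
  also have "\<dots> = f (gs_res w k)"
    by (simp add: gs_res_def ip linear_diff[OF lin] linear_sum[OF lin] linear_scale[OF lin])
  finally have r: "gs_res (\<lambda>i. f (w i)) k = f (gs_res w k)" .
  show ?case
    by (simp add: gs_rec r orthogonal_transformation_norm[OF f] linear_scale[OF lin])
qed

lemma norm_gs: "norm (gram_schmidt w k) = 0 \<or> norm (gram_schmidt w k) = 1"
  by (cases "gs_res w k = 0") (simp_all add: gs_rec)

lemma norm_gs_le: "norm (gram_schmidt w k) \<le> 1"
  using norm_gs[of w k] by auto

lemma gs_orth: "i \<noteq> j \<Longrightarrow> gram_schmidt w i \<bullet> gram_schmidt w j = 0"
proof -
  have "\<forall>i<k. gram_schmidt w i \<bullet> gram_schmidt w k = 0" for k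
  proof (induction k rule: less_induct)
    case (less k)
    show ?case
    proof (intro allI impI)
      fix m assume mk: "m < k"
      let ?e = "gram_schmidt w"
      have "?e m \<bullet> gs_res w k = ?e m \<bullet> w k - (\<Sum>j<k. (w k \<bullet> ?e j) * (?e m \<bullet> ?e j))"
        by (simp add: gs_res_def inner_diff_right inner_sum_right)
      also have "(\<Sum>j<k. (w k \<bullet> ?e j) * (?e m \<bullet> ?e j)) = (\<Sum>j\<in>{m}. (w k \<bullet> ?e j) * (?e m \<bullet> ?e j))"
      proof (rule sum.mono_neutral_right)
        show "\<forall>j\<in>{..<k} - {m}. (w k \<bullet> ?e j) * (?e m \<bullet> ?e j) = 0"
        proof
          fix j assume j: "j \<in> {..<k} - {m}"
          show "(w k \<bullet> ?e j) * (?e m \<bullet> ?e j) = 0"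
          proof (cases "j < m")
            case True then show ?thesis using less.IH[OF mk] by (simp add: inner_commute)
          next
            case False then have "m < j" "j < k" using j by auto
            then show ?thesis using less.IH[of j] by simp
          qed
        qed
      qed (use mk in auto)
      also have "?e m \<bullet> w k - (\<Sum>j\<in>{m}. (w k \<bullet> ?e j) * (?e m \<bullet> ?e j)) = 0"
      proof (cases "?e m = 0")
        case True then show ?thesis by simp
      next
        case False
        then have "norm (?e m) = 1" using norm_gs[of w m] by auto
        then have "?e m \<bullet> ?e m = 1" by (simp add: norm_eq_sqrt_inner)
        then show ?thesis by (simp add: inner_commute)
      qed
      finally have "?e m \<bullet> gs_res w k = 0" .
      then show "?e m \<bullet> ?e k = 0" by (simp add: gs_rec[of w k])
    qed
  qed
  moreover assume "i \<noteq> j"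
  ultimately show ?thesis
    by (metis inner_commute linorder_neqE_nat)
qed

lemma gs_zero_res: "gram_schmidt w k = 0 \<longleftrightarrow> gs_res w k = 0"
  by (simp add: gs_rec)


lemma vt_equiv:
  assumes f: "orthogonal_transformation f"
  shows "vt q (f g) (\<lambda>i. f (w i)) = f (vt q g w)"
proof -
  have lin: "linear f" using f by (rule orthogonal_transformation_linear)
  have ip: "f x \<bullet> f y = x \<bullet> y" for x y using f by (simp add: orthogonal_transformation_def)
  show ?thesis
    by (simp add: vt_def gs_orth_equiv[OF f] ip linear_sum[OF lin] linear_scale[OF lin])
qed

lemma g2_equiv:
  assumes f: "orthogonal_transformation f"
  shows "g2_est d q (f g) (\<lambda>i. f (w i)) = f (g2_est d q g w)"
proof -
  have lin: "linear f" using f by (rule orthogonal_transformation_linear)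
  have ip: "f x \<bullet> f y = x \<bullet> y" for x y using f by (simp add: orthogonal_transformation_def)
  show ?thesis
    by (simp add: g2_est_def vt_equiv[OF f] ip linear_scale[OF lin])
qed

lemma sgn_mult_self_real: "sgn (x::real) * x = \<bar>x\<bar>"
  by (simp add: sgn_real_def)

lemma g_inner_vt: "g \<bullet> vt q g w = (1 / sqrt (real q)) * (\<Sum>i<q. \<bar>g \<bullet> gram_schmidt w i\<bar>)"
  by (simp add: vt_def inner_sum_right sgn_mult_self_real)

lemma g_inner_g2:
  "g \<bullet> g2_est d q g w =
     real d / ((2 / pi) * (real q - 1) + 1) * (1 / real q) *
       (\<Sum>i<q. \<Sum>j<q. \<bar>g \<bullet> gram_schmidt w i\<bar> * \<bar>g \<bullet> gram_schmidt w j\<bar>)"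
proof -
  have "g \<bullet> g2_est d q g w = real d / ((2 / pi) * (real q - 1) + 1) * (g \<bullet> vt q g w)\<^sup>2"
    by (simp add: g2_est_def power2_eq_square)
  also have "(g \<bullet> vt q g w)\<^sup>2 = (1 / real q) * (\<Sum>i<q. \<Sum>j<q. \<bar>g \<bullet> gram_schmidt w i\<bar> * \<bar>g \<bullet> gram_schmidt w j\<bar>)"
    by (simp add: g_inner_vt power_mult_distrib power2_eq_square sum_product real_sqrt_mult[symmetric]
        flip: real_sqrt_mult)
  finally show ?thesis by simp
qed

lemma norm_vt_le: "norm (vt q g w) \<le> real q"
proof -
  have "norm (\<Sum>i<q. sgn (g \<bullet> gram_schmidt w i) *\<^sub>R gram_schmidt w i) \<le> (\<Sum>i<q. norm (sgn (g \<bullet> gram_schmidt w i) *\<^sub>R gram_schmidt w i))"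
    by (rule norm_sum)
  also have "\<dots> \<le> (\<Sum>i<(q::nat). (1::real))"
  proof (rule sum_mono)
    fix i
    have "\<bar>sgn (g \<bullet> gram_schmidt w i)\<bar> \<le> 1" by (simp add: abs_sgn_eq)
    then show "norm (sgn (g \<bullet> gram_schmidt w i) *\<^sub>R gram_schmidt w i) \<le> 1"
      using norm_gs_le[of w i] by (simp add: mult_le_one)
  qed
  finally have s: "norm (\<Sum>i<q. sgn (g \<bullet> gram_schmidt w i) *\<^sub>R gram_schmidt w i) \<le> real q" by simp
  have c: "\<bar>1 / sqrt (real q)\<bar> \<le> 1"
    by (cases "q = 0") (simp_all add: divide_le_eq_1)
  have "norm (vt q g w) = \<bar>1 / sqrt (real q)\<bar> * norm (\<Sum>i<q. sgn (g \<bullet> gram_schmidt w i) *\<^sub>R gram_schmidt w i)"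
    by (simp add: vt_def)
  also have "\<dots> \<le> 1 * real q"
    by (intro mult_mono c s) simp_all
  finally show ?thesis by simp
qed

lemma norm_g2_le:
  "norm (g2_est d q g w) \<le> \<bar>real d / ((2 / pi) * (real q - 1) + 1)\<bar> * norm g * (real q)\<^sup>2"
proof -
  let ?c = "real d / ((2 / pi) * (real q - 1) + 1)"
  have "norm (g2_est d q g w) = \<bar>?c\<bar> * \<bar>g \<bullet> vt q g w\<bar> * norm (vt q g w)"
    by (simp add: g2_est_def abs_mult)
  also have "\<dots> \<le> \<bar>?c\<bar> * (norm g * norm (vt q g w)) * norm (vt q g w)"
    by (intro mult_right_mono mult_left_mono Cauchy_Schwarz_ineq2) simp_all
  also have "\<dots> \<le> \<bar>?c\<bar> * (norm g * real q) * real q"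
    by (intro mult_mono mult_left_mono norm_vt_le) simp_all
  finally show ?thesis by (simp add: power2_eq_square mult.assoc)
qed


lemma gs_measurable:
  fixes W :: "nat \<Rightarrow> 's \<Rightarrow> 'a::euclidean_space"
  assumes Wm: "\<And>i. i \<le> k \<Longrightarrow> W i \<in> borel_measurable M"
  shows "(\<lambda>\<omega>. gram_schmidt (\<lambda>i. W i \<omega>) k) \<in> borel_measurable M"
  using Wm
proof (induction k rule: less_induct)
  case (less k)
  have IH: "(\<lambda>\<omega>. gram_schmidt (\<lambda>i. W i \<omega>) j) \<in> borel_measurable M" if "j < k" for j
    using less that by simp
  have Wk: "W k \<in> borel_measurable M" using less.prems by simp
  have r: "(\<lambda>\<omega>. gs_res (\<lambda>i. W i \<omega>) k) \<in> borel_measurable M"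
    unfolding gs_res_def
    by (intro borel_measurable_diff Wk borel_measurable_sum borel_measurable_scaleR borel_measurable_inner IH) simp_all
  show ?case
    unfolding gs_rec[of _ k] using r by measurable
qed

lemma vt_measurable:
  fixes W :: "nat \<Rightarrow> 's \<Rightarrow> 'a::euclidean_space"
  assumes Wm: "\<And>i. i < q \<Longrightarrow> W i \<in> borel_measurable M"
  shows "(\<lambda>\<omega>. vt q g (\<lambda>i. W i \<omega>)) \<in> borel_measurable M"
proof -
  have G: "(\<lambda>\<omega>. gram_schmidt (\<lambda>i. W i \<omega>) j) \<in> borel_measurable M" if "j < q" for j
    using that Wm by (intro gs_measurable) simp
  have S: "(\<lambda>\<omega>. sgn (g \<bullet> gram_schmidt (\<lambda>i. W i \<omega>) j)) \<in> borel_measurable M" if "j < q" for j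
  proof -
    have "(\<lambda>\<omega>. g \<bullet> gram_schmidt (\<lambda>i. W i \<omega>) j) \<in> borel_measurable M"
      using G[OF that] by (intro borel_measurable_inner) simp_all
    then show ?thesis by measurable
  qed
  show ?thesis unfolding vt_def
    by (intro borel_measurable_scaleR borel_measurable_const borel_measurable_sum S G) simp_all
qed

lemma g2_measurable:
  fixes W :: "nat \<Rightarrow> 's \<Rightarrow> 'a::euclidean_space"
  assumes Wm: "\<And>i. i < q \<Longrightarrow> W i \<in> borel_measurable M"
  shows "(\<lambda>\<omega>. g2_est d q g (\<lambda>i. W i \<omega>)) \<in> borel_measurable M"
  unfolding g2_est_def using vt_measurable[OF Wm] by measurable

lemma gs_restrict: "k < q \<Longrightarrow> gram_schmidt (restrict w {0..<q}) k = gram_schmidt w k"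
  by (rule gs_local) simp

lemma vt_restrict: "vt q g (restrict w {0..<q}) = vt q g w"
  by (simp add: vt_def gs_restrict)

lemma g2_restrict: "g2_est d q g (restrict w {0..<q}) = g2_est d q g w"
  by (simp add: g2_est_def vt_restrict)

lemma PiM_comp_meas: "i \<in> I \<Longrightarrow> (\<lambda>w. w i) \<in> borel_measurable (PiM I (\<lambda>_. (borel :: ('a::topological_space) measure)))"
  by (rule measurable_component_singleton)


locale setting =
  fixes M :: "'s measure" and W :: "nat \<Rightarrow> 's \<Rightarrow> real^'n" and q :: nat
  assumes PM: "prob_space M" and q1: "1 \<le> q" and qd: "q \<le> CARD('n)"
    and ind: "prob_space.indep_vars M (\<lambda>_. borel) W {0..<q}"
    and dist: "\<And>i. i < q \<Longrightarrow> distr M borel (W i) = unif_sphere"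
begin

interpretation P: prob_space M by (rule PM)

lemma Wm: "i < q \<Longrightarrow> W i \<in> borel_measurable M"
  using ind by (simp add: P.indep_vars_def)

lemma distr_PiM:
  fixes f :: "real^'n \<Rightarrow> real^'n"
  assumes f: "orthogonal_transformation f"
  shows "distr M (PiM {0..<q} (\<lambda>_. borel)) (\<lambda>\<omega>. \<lambda>i\<in>{0..<q}. f (W i \<omega>)) = PiM {0..<q} (\<lambda>_. unif_sphere)"
proof -
  have mf: "f \<in> borel_measurable borel" by (rule orth_borel_measurable[OF f])
  have ind': "P.indep_vars (\<lambda>_. borel) (\<lambda>i \<omega>. f (W i \<omega>)) {0..<q}"
    by (rule P.indep_vars_compose2[OF ind]) (simp add: mf)
  have d': "distr M borel (\<lambda>\<omega>. f (W i \<omega>)) = unif_sphere" if "i \<in> {0..<q}" for i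
  proof -
    have "distr M borel (\<lambda>\<omega>. f (W i \<omega>)) = distr M borel (f \<circ> W i)" by (simp add: comp_def)
    also have "\<dots> = distr (distr M borel (W i)) borel f"
      using that Wm mf by (subst distr_distr) simp_all
    also have "\<dots> = unif_sphere" using that by (simp add: dist unif_sphere_orth[OF f])
    finally show ?thesis .
  qed
  have rv: "(\<lambda>\<omega>. f (W i \<omega>)) \<in> measurable M borel" if "i \<in> {0..<q}" for i
    using measurable_compose[OF Wm[of i] mf] that by (simp add: comp_def)
  have "distr M (PiM {0..<q} (\<lambda>_. borel)) (\<lambda>\<omega>. \<lambda>i\<in>{0..<q}. f (W i \<omega>)) = PiM {0..<q} (\<lambda>i. distr M borel (\<lambda>\<omega>. f (W i \<omega>)))"
    using P.indep_vars_iff_distr_eq_PiM'[where I="{0..<q}" and M'="\<lambda>_. borel" and X="\<lambda>i \<omega>. f (W i \<omega>)"] q1 rv ind' by simp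
  also have "\<dots> = PiM {0..<q} (\<lambda>_. unif_sphere)"
    by (rule PiM_cong) (simp_all add: d')
  finally show ?thesis .
qed

lemma law_inv:
  fixes H :: "(nat \<Rightarrow> real^'n) \<Rightarrow> 'b::{banach, second_countable_topology}" and f :: "real^'n \<Rightarrow> real^'n"
  assumes f: "orthogonal_transformation f" and Hm: "H \<in> borel_measurable (PiM {0..<q} (\<lambda>_. borel))"
  shows "(\<integral>\<omega>. H (\<lambda>i\<in>{0..<q}. f (W i \<omega>)) \<partial>M) = (\<integral>\<omega>. H (\<lambda>i\<in>{0..<q}. W i \<omega>) \<partial>M)"
proof -
  have mf: "f \<in> borel_measurable borel" by (rule orth_borel_measurable[OF f])
  have X: "(\<lambda>\<omega>. \<lambda>i\<in>{0..<q}. g (W i \<omega>)) \<in> M \<rightarrow>\<^sub>M PiM {0..<q} (\<lambda>_. borel)"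
    if "g \<in> borel_measurable borel" for g :: "real^'n \<Rightarrow> real^'n"
    using that Wm by (intro measurable_restrict) simp
  have "(\<integral>\<omega>. H (\<lambda>i\<in>{0..<q}. f (W i \<omega>)) \<partial>M) = (\<integral>x. H x \<partial>distr M (PiM {0..<q} (\<lambda>_. borel)) (\<lambda>\<omega>. \<lambda>i\<in>{0..<q}. f (W i \<omega>)))"
    by (rule integral_distr[OF X[OF mf] Hm, symmetric])
  also have "\<dots> = (\<integral>x. H x \<partial>distr M (PiM {0..<q} (\<lambda>_. borel)) (\<lambda>\<omega>. \<lambda>i\<in>{0..<q}. (\<lambda>x. x) (W i \<omega>)))"
    using distr_PiM[OF f] distr_PiM[OF orthogonal_transformation_id] by simp
  also have "\<dots> = (\<integral>\<omega>. H (\<lambda>i\<in>{0..<q}. W i \<omega>) \<partial>M)"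
    by (rule integral_distr[OF X Hm]) simp
  finally show ?thesis .
qed

end


lemma section_subspace_null:
  fixes e :: "nat \<Rightarrow> real^'n"
  assumes kd: "k < CARD('n)" and A: "A \<in> sets borel"
    and sub: "A \<subseteq> {y. y - (\<Sum>j<k. (y \<bullet> e j) *\<^sub>R e j) = 0}"
  shows "emeasure unif_sphere A = 0"
proof (rule unif_sphere_subspace_null[OF A])
  let ?V = "span (e ` {..<k})"
  show "A \<subseteq> ?V"
  proof
    fix y assume "y \<in> A"
    then have "y = (\<Sum>j<k. (y \<bullet> e j) *\<^sub>R e j)" using sub by auto
    also have "\<dots> \<in> ?V" by (intro span_sum span_mul span_base) auto
    finally show "y \<in> ?V" .
  qed
  show "subspace ?V" by (rule subspace_span)
  have "dim ?V \<le> card (e ` {..<k})" by (intro dim_le_card) auto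
  also have "\<dots> \<le> k" using card_image_le[of "{..<k}" e] by simp
  finally show "dim ?V < DIM(real^'n)" using kd by simp
qed

context setting
begin

interpretation P: prob_space M by (rule PM)

lemma nondeg:
  assumes kq: "k < q"
  shows "AE \<omega> in M. gram_schmidt (\<lambda>i. W i \<omega>) k \<noteq> 0"
proof -
  define A where "A = {0..<k}"
  define XA where "XA \<omega> = (\<lambda>i\<in>A. W i \<omega>)" for \<omega>
  define XB where "XB \<omega> = (\<lambda>i\<in>{k}. W i \<omega>)" for \<omega>
  let ?PA = "PiM A (\<lambda>_. borel :: (real^'n) measure)"
  let ?PB = "PiM {k} (\<lambda>_. borel :: (real^'n) measure)"
  have iv: "P.indep_var ?PA XA ?PB XB"
    unfolding XA_def XB_def using kq by (intro P.indep_var_restrict[OF ind]) (auto simp: A_def)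
  have XAm: "XA \<in> M \<rightarrow>\<^sub>M ?PA" and XBm: "XB \<in> M \<rightarrow>\<^sub>M ?PB"
    using iv by (simp_all add: P.indep_var_distribution_eq)
  have jd: "distr M (?PA \<Otimes>\<^sub>M ?PB) (\<lambda>\<omega>. (XA \<omega>, XB \<omega>)) = distr M ?PA XA \<Otimes>\<^sub>M distr M ?PB XB"
    using iv by (simp add: P.indep_var_distribution_eq)
  define R where "R p = snd p k - (\<Sum>j<k. (snd p k \<bullet> gram_schmidt (fst p) j) *\<^sub>R gram_schmidt (fst p) j)"
    for p :: "(nat \<Rightarrow> real^'n) \<times> (nat \<Rightarrow> real^'n)"
  have gsm: "(\<lambda>p. gram_schmidt (fst p) j) \<in> borel_measurable (?PA \<Otimes>\<^sub>M ?PB)" if "j < k" for j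
  proof (rule gs_measurable[where W="\<lambda>i p. fst p i"])
    fix i assume "i \<le> j"
    then have "i \<in> A" using that by (simp add: A_def)
    then show "(\<lambda>p. fst p i) \<in> borel_measurable (?PA \<Otimes>\<^sub>M ?PB)"
      by (intro measurable_compose[OF measurable_fst] measurable_component_singleton)
  qed
  have sk: "(\<lambda>p. snd p k) \<in> borel_measurable (?PA \<Otimes>\<^sub>M ?PB)"
    by (intro measurable_compose[OF measurable_snd] measurable_component_singleton) simp
  have Rm: "R \<in> borel_measurable (?PA \<Otimes>\<^sub>M ?PB)"
    unfolding R_def
    by (intro borel_measurable_diff borel_measurable_sum borel_measurable_scaleR borel_measurable_inner gsm sk) simp_all
  define S where "S = {p \<in> space (?PA \<Otimes>\<^sub>M ?PB). R p = 0}"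
  have Ssets: "S \<in> sets (?PA \<Otimes>\<^sub>M ?PB)"
    unfolding S_def using Rm by measurable
  have PBprob: "prob_space (distr M ?PB XB)" by (rule P.prob_space_distr[OF XBm])
  have "emeasure (distr M ?PA XA \<Otimes>\<^sub>M distr M ?PB XB) S = (\<integral>\<^sup>+x. emeasure (distr M ?PB XB) (Pair x -` S) \<partial>distr M ?PA XA)"
    using Ssets prob_space_imp_sigma_finite[OF PBprob]
    by (intro sigma_finite_measure.emeasure_pair_measure_alt)
       (simp_all cong: sets_pair_measure_cong)
  also have "\<dots> = (\<integral>\<^sup>+x. 0 \<partial>distr M ?PA XA)"
  proof (rule nn_integral_cong)
    fix x
    define T where "T = {v::real^'n. v - (\<Sum>j<k. (v \<bullet> gram_schmidt x j) *\<^sub>R gram_schmidt x j) = 0}"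
    have Tb: "T \<in> sets borel" unfolding T_def by measurable
    have T0: "emeasure unif_sphere T = 0"
    proof (rule section_subspace_null[where k=k and e="gram_schmidt x"])
      show "k < CARD('n)" using kq qd by simp
    qed (simp_all add: Tb T_def)
    have sx: "Pair x -` S \<in> sets ?PB"
      using sets_Pair1[OF Ssets] .
    have "emeasure (distr M ?PB XB) (Pair x -` S) = emeasure M (XB -` (Pair x -` S) \<inter> space M)"
      using XBm sx by (simp add: emeasure_distr)
    also have "\<dots> \<le> emeasure M (W k -` T \<inter> space M)"
    proof (rule emeasure_mono)
      show "XB -` Pair x -` S \<inter> space M \<subseteq> W k -` T \<inter> space M"
        by (auto simp: S_def R_def T_def XB_def)
      show "W k -` T \<inter> space M \<in> sets M"
        using Wm[OF kq] Tb by (rule measurable_sets)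
    qed
    also have "\<dots> = emeasure (distr M borel (W k)) T"
      using Wm[OF kq] Tb by (simp add: emeasure_distr)
    also have "\<dots> = 0" using T0 dist[OF kq] by simp
    finally show "emeasure (distr M ?PB XB) (Pair x -` S) = 0" by simp
  qed
  also have "\<dots> = 0" by simp
  finally have S0: "emeasure (distr M ?PA XA \<Otimes>\<^sub>M distr M ?PB XB) S = 0" .
  define N where "N = (\<lambda>\<omega>. (XA \<omega>, XB \<omega>)) -` S \<inter> space M"
  have pm: "(\<lambda>\<omega>. (XA \<omega>, XB \<omega>)) \<in> M \<rightarrow>\<^sub>M ?PA \<Otimes>\<^sub>M ?PB"
    using XAm XBm by (rule measurable_Pair)
  have Nsets: "N \<in> sets M" unfolding N_def using pm Ssets by (rule measurable_sets)
  have "emeasure M N = emeasure (distr M (?PA \<Otimes>\<^sub>M ?PB) (\<lambda>\<omega>. (XA \<omega>, XB \<omega>))) S"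
    unfolding N_def using pm Ssets by (simp add: emeasure_distr)
  also have "\<dots> = 0" using S0 jd by simp
  finally have N0: "N \<in> null_sets M" using Nsets by (auto intro: null_setsI)
  show ?thesis
  proof (rule AE_I'[OF N0])
    show "{\<omega> \<in> space M. \<not> gram_schmidt (\<lambda>i. W i \<omega>) k \<noteq> 0} \<subseteq> N"
    proof
      fix \<omega> assume "\<omega> \<in> {\<omega> \<in> space M. \<not> gram_schmidt (\<lambda>i. W i \<omega>) k \<noteq> 0}"
      then have om: "\<omega> \<in> space M" and z: "gram_schmidt (\<lambda>i. W i \<omega>) k = 0" by auto
      have eqj: "gram_schmidt (XA \<omega>) j = gram_schmidt (\<lambda>i. W i \<omega>) j" if "j < k" for j
        using that by (intro gs_local) (simp add: XA_def A_def)
      have "gs_res (\<lambda>i. W i \<omega>) k = 0" using z by (simp add: gs_zero_res)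
      then have "R (XA \<omega>, XB \<omega>) = 0"
        by (simp add: R_def gs_res_def eqj XB_def)
      moreover have "(XA \<omega>, XB \<omega>) \<in> space (?PA \<Otimes>\<^sub>M ?PB)"
        using measurable_space[OF pm om] .
      ultimately show "\<omega> \<in> N" using om by (simp add: N_def S_def)
    qed
  qed
qed

lemma AE_unit:
  "AE \<omega> in M. \<forall>k<q. norm (gram_schmidt (\<lambda>i. W i \<omega>) k) = 1"
proof -
  have "AE \<omega> in M. \<forall>k\<in>{..<q}. gram_schmidt (\<lambda>i. W i \<omega>) k \<noteq> 0"
    using nondeg by (subst AE_finite_all) auto
  then show ?thesis
  proof eventually_elim
    case (elim \<omega>)
    then show ?case using norm_gs by fastforce
  qed
qed

end


lemma inner_abs_le1:
  fixes z e :: "'a::real_inner"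
  assumes "norm z \<le> 1" "norm e \<le> 1"
  shows "\<bar>z \<bullet> e\<bar> \<le> 1"
proof -
  have "\<bar>z \<bullet> e\<bar> \<le> norm z * norm e" by (rule Cauchy_Schwarz_ineq2)
  also have "\<dots> \<le> 1 * 1" using assms by (intro mult_mono) auto
  finally show ?thesis by simp
qed

lemma norm_nz_le: "norm (nz (z::'a::real_normed_vector)) \<le> 1"
  by (cases "z = 0") (simp_all add: nz_def)

context setting
begin

interpretation P: prob_space M by (rule PM)

lemma gsW_meas: "k < q \<Longrightarrow> (\<lambda>\<omega>. gram_schmidt (\<lambda>l. W l \<omega>) k) \<in> borel_measurable M"
  by (intro gs_measurable Wm) simp

lemma gsPi_meas: "k < q \<Longrightarrow> (\<lambda>w. gram_schmidt w k) \<in> borel_measurable (PiM {0..<q} (\<lambda>_. (borel :: (real^'n) measure)))"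
  by (intro gs_measurable[where W="\<lambda>l w. w l"] measurable_component_singleton) simp

lemma scale_inv:
  assumes iq: "i < q" and jq: "j < q" and g: "g \<noteq> 0" and z: "norm z = 1"
  shows "(\<integral>\<omega>. \<bar>g \<bullet> gram_schmidt (\<lambda>l. W l \<omega>) i\<bar> * \<bar>g \<bullet> gram_schmidt (\<lambda>l. W l \<omega>) j\<bar> \<partial>M)
       = (norm g)\<^sup>2 * (\<integral>\<omega>. \<bar>z \<bullet> gram_schmidt (\<lambda>l. W l \<omega>) i\<bar> * \<bar>z \<bullet> gram_schmidt (\<lambda>l. W l \<omega>) j\<bar> \<partial>M)"
proof -
  have ng: "norm (g /\<^sub>R norm g) = 1" using g by simp
  obtain f where f: "orthogonal_transformation f" and fz: "f z = g /\<^sub>R norm g"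
    using orthogonal_transformation_exists_1[OF z ng] by blast
  have ip: "f x \<bullet> f y = x \<bullet> y" for x y using f by (simp add: orthogonal_transformation_def)
  have gf: "g = norm g *\<^sub>R f z" using g fz by simp
  define H where "H w = \<bar>g \<bullet> gram_schmidt w i\<bar> * \<bar>g \<bullet> gram_schmidt w j\<bar>" for w :: "nat \<Rightarrow> real^'n"
  have Hm: "H \<in> borel_measurable (PiM {0..<q} (\<lambda>_. borel))"
    unfolding H_def using gsPi_meas[OF iq] gsPi_meas[OF jq] by measurable
  have Hr: "H (restrict w {0..<q}) = H w" for w
    using iq jq by (simp add: H_def gs_restrict)
  have Hf: "H (\<lambda>l. f (w l)) = (norm g)\<^sup>2 * (\<bar>z \<bullet> gram_schmidt w i\<bar> * \<bar>z \<bullet> gram_schmidt w j\<bar>)" for w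
  proof -
    have "g \<bullet> gram_schmidt (\<lambda>l. f (w l)) k = norm g * (z \<bullet> gram_schmidt w k)" for k
      by (subst gf) (simp add: gs_orth_equiv[OF f] ip)
    then show ?thesis by (simp add: H_def abs_mult power2_eq_square)
  qed
  have "(\<integral>\<omega>. H (\<lambda>l. W l \<omega>) \<partial>M) = (\<integral>\<omega>. H (\<lambda>l\<in>{0..<q}. W l \<omega>) \<partial>M)"
    by (simp add: Hr)
  also have "\<dots> = (\<integral>\<omega>. H (\<lambda>l\<in>{0..<q}. f (W l \<omega>)) \<partial>M)"
    by (rule law_inv[OF f Hm, symmetric])
  also have "\<dots> = (\<integral>\<omega>. H (\<lambda>l. f (W l \<omega>)) \<partial>M)"
    by (simp only: Hr)
  also have "\<dots> = (\<integral>\<omega>. (norm g)\<^sup>2 * (\<bar>z \<bullet> gram_schmidt (\<lambda>l. W l \<omega>) i\<bar> * \<bar>z \<bullet> gram_schmidt (\<lambda>l. W l \<omega>) j\<bar>) \<partial>M)"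
    by (simp only: Hf)
  also have "\<dots> = (norm g)\<^sup>2 * (\<integral>\<omega>. \<bar>z \<bullet> gram_schmidt (\<lambda>l. W l \<omega>) i\<bar> * \<bar>z \<bullet> gram_schmidt (\<lambda>l. W l \<omega>) j\<bar> \<partial>M)"
    by simp
  finally show ?thesis by (simp add: H_def)
qed

lemma kappa:
  fixes z :: "real^'n"
  assumes iq: "i < q" and jq: "j < q" and z: "norm z = 1"
  shows "(\<integral>\<omega>. \<bar>z \<bullet> gram_schmidt (\<lambda>l. W l \<omega>) i\<bar> * \<bar>z \<bullet> gram_schmidt (\<lambda>l. W l \<omega>) j\<bar> \<partial>M)
       = (if i = j then 1 / real CARD('n) else 2 / (pi * real CARD('n)))"
proof -
  interpret S: prob_space "unif_sphere :: (real^'n) measure" by (rule prob_unif_sphere)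
  interpret PP: pair_prob_space M "unif_sphere :: (real^'n) measure"
    by (simp add: pair_prob_space_def pair_sigma_finite_def PM prob_unif_sphere prob_space_imp_sigma_finite)
  define kap where "kap y = (\<integral>\<omega>. \<bar>y \<bullet> gram_schmidt (\<lambda>l. W l \<omega>) i\<bar> * \<bar>y \<bullet> gram_schmidt (\<lambda>l. W l \<omega>) j\<bar> \<partial>M)" for y :: "real^'n"
  have kconst: "kap y = kap z" if y: "norm y = 1" for y
  proof -
    have "y \<noteq> 0" using y by auto
    then show ?thesis unfolding kap_def using scale_inv[OF iq jq _ z, of y] y by simp
  qed
  define cij where "cij = (if i = j then 1 / real CARD('n) else 2 / (pi * real CARD('n)))"
  define \<Phi> where "\<Phi> \<omega> y = \<bar>nz y \<bullet> gram_schmidt (\<lambda>l. W l \<omega>) i\<bar> * \<bar>nz y \<bullet> gram_schmidt (\<lambda>l. W l \<omega>) j\<bar>"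
    for \<omega> and y :: "real^'n"
  have e1: "(\<lambda>p. gram_schmidt (\<lambda>l. W l (fst p)) k) \<in> borel_measurable (M \<Otimes>\<^sub>M (unif_sphere :: (real^'n) measure))" if "k < q" for k
    by (rule measurable_compose[OF measurable_fst gsW_meas[OF that]])
  have nzs: "nz \<in> borel_measurable (unif_sphere :: (real^'n) measure)"
    using nz_meas by (simp cong: measurable_cong_sets)
  have e2: "(\<lambda>p. nz (snd p :: real^'n)) \<in> borel_measurable (M \<Otimes>\<^sub>M (unif_sphere :: (real^'n) measure))"
    by (rule measurable_compose[OF measurable_snd nzs])
  have \<Phi>m: "(\<lambda>(\<omega>, y). \<Phi> \<omega> y) \<in> borel_measurable (M \<Otimes>\<^sub>M (unif_sphere :: (real^'n) measure))"
    unfolding \<Phi>_def split_beta' using e1[OF iq] e1[OF jq] e2 by measurable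
  have \<Phi>\<omega>: "\<Phi> \<omega> \<in> borel_measurable (unif_sphere :: (real^'n) measure)" for \<omega>
    unfolding \<Phi>_def using nzs by measurable
  have \<Phi>b: "\<bar>\<Phi> \<omega> y\<bar> \<le> 1" for \<omega> y
  proof -
    have a: "\<bar>nz y \<bullet> gram_schmidt (\<lambda>l. W l \<omega>) k\<bar> \<le> 1" for k
      by (intro inner_abs_le1 norm_nz_le norm_gs_le)
    have "\<bar>\<Phi> \<omega> y\<bar> = \<bar>nz y \<bullet> gram_schmidt (\<lambda>l. W l \<omega>) i\<bar> * \<bar>nz y \<bullet> gram_schmidt (\<lambda>l. W l \<omega>) j\<bar>"
      by (simp add: \<Phi>_def)
    also have "\<dots> \<le> 1 * 1" using a by (intro mult_mono) auto
    finally show ?thesis by simp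
  qed
  have int: "integrable (M \<Otimes>\<^sub>M (unif_sphere :: (real^'n) measure)) (\<lambda>(\<omega>, y). \<Phi> \<omega> y)"
    using \<Phi>m \<Phi>b by (intro PP.P.integrable_const_bound[where B=1]) auto
  have fub: "(\<integral>y. (\<integral>\<omega>. \<Phi> \<omega> y \<partial>M) \<partial>(unif_sphere :: (real^'n) measure)) = (\<integral>\<omega>. (\<integral>y. \<Phi> \<omega> y \<partial>unif_sphere) \<partial>M)"
    using PP.Fubini_integral[OF int] by simp
  have L: "(\<integral>y. (\<integral>\<omega>. \<Phi> \<omega> y \<partial>M) \<partial>(unif_sphere :: (real^'n) measure)) = kap z"
  proof -
    have "(\<integral>y. (\<integral>\<omega>. \<Phi> \<omega> y \<partial>M) \<partial>(unif_sphere :: (real^'n) measure)) = (\<integral>y. kap z \<partial>(unif_sphere :: (real^'n) measure))"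
    proof (rule integral_cong_AE)
      show "AE y in unif_sphere. (\<integral>\<omega>. \<Phi> \<omega> y \<partial>M) = kap z"
        using AE_unif_sphere_norm
      proof eventually_elim
        fix y :: "real^'n" assume y: "norm y = 1"
        then have "nz y = y" by (simp add: nz_def)
        then show "(\<integral>\<omega>. \<Phi> \<omega> y \<partial>M) = kap z" using kconst[OF y] by (simp add: \<Phi>_def kap_def)
      qed
    qed (use \<Phi>m in simp_all)
    also have "\<dots> = kap z" using S.prob_space by simp
    finally show ?thesis .
  qed
  have R: "(\<integral>\<omega>. (\<integral>y. \<Phi> \<omega> y \<partial>unif_sphere) \<partial>M) = cij"
  proof -
    have "(\<integral>\<omega>. (\<integral>y. \<Phi> \<omega> y \<partial>unif_sphere) \<partial>M) = (\<integral>\<omega>. cij \<partial>M)"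
    proof (rule integral_cong_AE)
      show "AE \<omega> in M. (\<integral>y. \<Phi> \<omega> y \<partial>unif_sphere) = cij"
        using AE_unit
      proof eventually_elim
        fix \<omega> assume un: "\<forall>k<q. norm (gram_schmidt (\<lambda>i. W i \<omega>) k) = 1"
        define ei where "ei = gram_schmidt (\<lambda>l. W l \<omega>) i"
        define ej where "ej = gram_schmidt (\<lambda>l. W l \<omega>) j"
        have nei: "norm ei = 1" "norm ej = 1" using un iq jq by (simp_all add: ei_def ej_def)
        have "(\<integral>y. \<Phi> \<omega> y \<partial>unif_sphere) = (\<integral>y. \<bar>y \<bullet> ei\<bar> * \<bar>y \<bullet> ej\<bar> \<partial>(unif_sphere :: (real^'n) measure))"
        proof (rule integral_cong_AE)
          show "AE y in unif_sphere. \<Phi> \<omega> y = \<bar>y \<bullet> ei\<bar> * \<bar>y \<bullet> ej\<bar>"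
            using AE_unif_sphere_norm by eventually_elim (simp add: \<Phi>_def nz_def ei_def ej_def)
        qed (simp_all add: \<Phi>\<omega>)
        also have "\<dots> = cij"
        proof (cases "i = j")
          case True
          have "(\<integral>y. \<bar>y \<bullet> ei\<bar> * \<bar>y \<bullet> ej\<bar> \<partial>(unif_sphere :: (real^'n) measure)) = (\<integral>y. (y \<bullet> ei)\<^sup>2 \<partial>(unif_sphere :: (real^'n) measure))"
            using True by (simp add: ei_def ej_def power2_eq_square abs_mult_self_eq)
          also have "\<dots> = 1 / real CARD('n)" by (rule sphere_sq[OF nei(1)])
          finally show ?thesis using True by (simp add: cij_def)
        next
          case False
          have uu: "ei \<bullet> ei = 1" "ej \<bullet> ej = 1" using nei by (simp_all add: norm_eq_1)
          have uv: "ei \<bullet> ej = 0" using False by (simp add: ei_def ej_def gs_orth)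
          show ?thesis using sphere_abs[OF uu uv] False by (simp add: cij_def)
        qed
        finally show "(\<integral>y. \<Phi> \<omega> y \<partial>unif_sphere) = cij" .
      qed
    qed (use \<Phi>m in simp_all)
    also have "\<dots> = cij" by (simp add: P.prob_space)
    finally show ?thesis .
  qed
  show ?thesis using fub L R by (simp add: kap_def cij_def)
qed

end


lemma sum_if_eq: "i < q \<Longrightarrow> (\<Sum>j<q. if i = j then a else b) = a + (real q - 1) * (b::real)"
proof -
  assume iq: "i < q"
  have "(\<Sum>j<q. if i = j then a else b) = (\<Sum>j<q. b + (if i = j then a - b else 0))"
    by (intro sum.cong) auto
  also have "\<dots> = real q * b + (a - b)"
    using iq by (simp add: sum.distrib sum.delta)
  finally show ?thesis by (simp add: algebra_simps)
qed

lemma cancel_lemma: "d \<noteq> 0 \<Longrightarrow> c \<noteq> 0 \<Longrightarrow> q \<noteq> 0 \<Longrightarrow> d / c * (1 / q) * (q * N * (c / d)) = (N::real)"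
  by (simp add: field_simps)

definition refl_h :: "'a::real_inner \<Rightarrow> 'a \<Rightarrow> 'a" where
  "refl_h h x = x - ((x \<bullet> h) * (2 / (h \<bullet> h))) *\<^sub>R h"

lemma refl_h_orth:
  fixes h :: "'a::real_inner"
  assumes h: "h \<noteq> 0"
  shows "orthogonal_transformation (refl_h h)"
  unfolding orthogonal_transformation_def
proof (intro conjI allI)
  show "linear (refl_h h)"
  proof (rule linearI)
    fix x y :: 'a and r :: real
    show "refl_h h (x + y) = refl_h h x + refl_h h y"
      unfolding refl_h_def inner_add_left distrib_right scaleR_add_left by simp
    show "refl_h h (r *\<^sub>R x) = r *\<^sub>R refl_h h x"
      unfolding refl_h_def inner_scaleR_left scaleR_diff_right scaleR_scaleR by (simp add: mult.assoc)
  qed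
  fix x y :: 'a
  have hh: "h \<bullet> h \<noteq> 0" using h by simp
  define c where "c = 2 / (h \<bullet> h)"
  have cc: "c * c * (h \<bullet> h) = 2 * c" using hh by (simp add: c_def power2_eq_square)
  have hy: "h \<bullet> y = y \<bullet> h" by (rule inner_commute)
  have "refl_h h x \<bullet> refl_h h y = x \<bullet> y - (y \<bullet> h) * c * (x \<bullet> h) - (x \<bullet> h) * c * (h \<bullet> y) + (x \<bullet> h) * c * ((y \<bullet> h) * c) * (h \<bullet> h)"
    unfolding refl_h_def c_def[symmetric] inner_diff_left inner_diff_right inner_scaleR_left inner_scaleR_right
    by (simp add: algebra_simps)
  also have "\<dots> = x \<bullet> y - 2 * c * (x \<bullet> h) * (y \<bullet> h) + (x \<bullet> h) * (y \<bullet> h) * (c * c * (h \<bullet> h))"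
    unfolding hy by (simp add: algebra_simps)
  also have "\<dots> = x \<bullet> y" unfolding cc by (simp add: algebra_simps)
  finally show "refl_h h x \<bullet> refl_h h y = x \<bullet> y" .
qed

context setting
begin

interpretation P: prob_space M by (rule PM)

lemma pair_exp:
  assumes iq: "i < q" and jq: "j < q"
  shows "(\<integral>\<omega>. \<bar>g \<bullet> gram_schmidt (\<lambda>l. W l \<omega>) i\<bar> * \<bar>g \<bullet> gram_schmidt (\<lambda>l. W l \<omega>) j\<bar> \<partial>M)
       = (norm g)\<^sup>2 * (if i = j then 1 / real CARD('n) else 2 / (pi * real CARD('n)))"
proof (cases "g = 0")
  case True then show ?thesis by simp
next
  case False
  have nz1: "norm (g /\<^sub>R norm g) = 1" using False by simp
  show ?thesis using scale_inv[OF iq jq False nz1] kappa[OF iq jq nz1] by simp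
qed

lemma F_meas: "(\<lambda>\<omega>. g2_est d q g (\<lambda>i. W i \<omega>)) \<in> borel_measurable M"
  by (rule g2_measurable) (rule Wm)

lemma F_int: "integrable M (\<lambda>\<omega>. g2_est d q g (\<lambda>i. W i \<omega>))"
  by (intro P.integrable_const_bound[where B="\<bar>real d / ((2 / pi) * (real q - 1) + 1)\<bar> * norm g * (real q)\<^sup>2"]
      AE_I2 norm_g2_le F_meas)

lemma prod_int: "i < q \<Longrightarrow> j < q \<Longrightarrow> integrable M (\<lambda>\<omega>. \<bar>g \<bullet> gram_schmidt (\<lambda>l. W l \<omega>) i\<bar> * \<bar>g \<bullet> gram_schmidt (\<lambda>l. W l \<omega>) j\<bar>)"
proof -
  assume iq: "i < q" and jq: "j < q"
  have b: "\<bar>\<bar>g \<bullet> gram_schmidt (\<lambda>l. W l \<omega>) i\<bar> * \<bar>g \<bullet> gram_schmidt (\<lambda>l. W l \<omega>) j\<bar>\<bar> \<le> norm g * norm g" for \<omega>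
  proof -
    have a: "\<bar>g \<bullet> gram_schmidt (\<lambda>l. W l \<omega>) k\<bar> \<le> norm g" for k
    proof -
      have "\<bar>g \<bullet> gram_schmidt (\<lambda>l. W l \<omega>) k\<bar> \<le> norm g * norm (gram_schmidt (\<lambda>l. W l \<omega>) k)"
        by (rule Cauchy_Schwarz_ineq2)
      also have "\<dots> \<le> norm g * 1" by (intro mult_left_mono norm_gs_le) simp
      finally show ?thesis by simp
    qed
    show ?thesis using a[of i] a[of j] by (simp add: abs_mult mult_mono)
  qed
  show ?thesis
    using gsW_meas[OF iq] gsW_meas[OF jq] b
    by (intro P.integrable_const_bound[where B="norm g * norm g"] AE_I2) (auto intro!: borel_measurable_inner)
qed

lemma main_result:
  assumes g: "g \<noteq> 0"
  shows "has_bochner_integral M (\<lambda>\<omega>. g2_est CARD('n) q g (\<lambda>i. W i \<omega>)) g"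
proof -
  let ?d = "CARD('n)"
  define F where "F \<omega> = g2_est ?d q g (\<lambda>i. W i \<omega>)" for \<omega>
  have Fi: "integrable M F" unfolding F_def by (rule F_int)
  define m where "m = (\<integral>\<omega>. F \<omega> \<partial>M)"
  have perp: "m \<bullet> h = 0" if hg: "h \<bullet> g = 0" and h0: "h \<noteq> 0" for h
  proof -
    let ?f = "refl_h h"
    have f: "orthogonal_transformation ?f" by (rule refl_h_orth[OF h0])
    have fg: "?f g = g" using hg by (simp add: refl_h_def inner_commute)
    define H where "H w = g2_est ?d q g w" for w :: "nat \<Rightarrow> real^'n"
    have Hm: "H \<in> borel_measurable (PiM {0..<q} (\<lambda>_. borel))"
      unfolding H_def by (rule g2_measurable[where W="\<lambda>l w. w l"]) (simp add: measurable_component_singleton)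
    have Hr: "H (restrict w {0..<q}) = H w" for w by (simp add: H_def g2_restrict)
    have Hf: "H (\<lambda>l. ?f (w l)) = ?f (H w)" for w
      using g2_equiv[OF f, of ?d q g w] by (simp add: H_def fg)
    have "(\<integral>\<omega>. ?f (F \<omega>) \<partial>M) = (\<integral>\<omega>. H (\<lambda>l. ?f (W l \<omega>)) \<partial>M)"
      by (simp add: Hf F_def H_def)
    also have "\<dots> = (\<integral>\<omega>. H (\<lambda>l\<in>{0..<q}. ?f (W l \<omega>)) \<partial>M)" by (simp only: Hr)
    also have "\<dots> = (\<integral>\<omega>. H (\<lambda>l\<in>{0..<q}. W l \<omega>) \<partial>M)" by (rule law_inv[OF f Hm])
    also have "\<dots> = m" by (simp only: Hr) (simp add: m_def F_def H_def)
    finally have e1: "(\<integral>\<omega>. ?f (F \<omega>) \<partial>M) = m" .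
    have bl: "bounded_linear ?f"
      using orthogonal_transformation_linear[OF f] by (simp add: linear_conv_bounded_linear)
    have "(\<integral>\<omega>. ?f (F \<omega>) \<partial>M) = ?f m"
      unfolding m_def by (rule integral_bounded_linear[OF bl Fi])
    with e1 have "?f m = m" by simp
    then have "((m \<bullet> h) * (2 / (h \<bullet> h))) *\<^sub>R h = 0" by (simp add: refl_h_def)
    then show ?thesis using h0 by simp
  qed
  define \<mu> where "\<mu> = (m \<bullet> g) / (g \<bullet> g)"
  have gg: "g \<bullet> g \<noteq> 0" using g by simp
  have mg: "m = \<mu> *\<^sub>R g"
  proof (rule ccontr)
    assume ne: "m \<noteq> \<mu> *\<^sub>R g"
    define h where "h = m - \<mu> *\<^sub>R g"
    have h0: "h \<noteq> 0" using ne by (simp add: h_def)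
    have hg: "h \<bullet> g = 0" using gg by (simp add: h_def \<mu>_def inner_diff_left)
    have "m \<bullet> h = 0" by (rule perp[OF hg h0])
    then have "h \<bullet> h = 0" using hg by (simp add: h_def inner_diff_left inner_diff_right inner_commute)
    with h0 show False by simp
  qed
  have "g \<bullet> m = (\<integral>\<omega>. g \<bullet> F \<omega> \<partial>M)"
    unfolding m_def by (rule integral_bounded_linear[OF bounded_linear_inner_right Fi, symmetric])
  also have "\<dots> = (\<integral>\<omega>. real ?d / ((2 / pi) * (real q - 1) + 1) * (1 / real q) *
       (\<Sum>i<q. \<Sum>j<q. \<bar>g \<bullet> gram_schmidt (\<lambda>l. W l \<omega>) i\<bar> * \<bar>g \<bullet> gram_schmidt (\<lambda>l. W l \<omega>) j\<bar>) \<partial>M)"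
    by (simp add: F_def g_inner_g2)
  also have "\<dots> = real ?d / ((2 / pi) * (real q - 1) + 1) * (1 / real q) *
       (\<Sum>i<q. \<Sum>j<q. (\<integral>\<omega>. \<bar>g \<bullet> gram_schmidt (\<lambda>l. W l \<omega>) i\<bar> * \<bar>g \<bullet> gram_schmidt (\<lambda>l. W l \<omega>) j\<bar> \<partial>M))"
  proof -
    have "(\<integral>\<omega>. (\<Sum>i<q. \<Sum>j<q. \<bar>g \<bullet> gram_schmidt (\<lambda>l. W l \<omega>) i\<bar> * \<bar>g \<bullet> gram_schmidt (\<lambda>l. W l \<omega>) j\<bar>) \<partial>M)
      = (\<Sum>i<q. \<Sum>j<q. (\<integral>\<omega>. \<bar>g \<bullet> gram_schmidt (\<lambda>l. W l \<omega>) i\<bar> * \<bar>g \<bullet> gram_schmidt (\<lambda>l. W l \<omega>) j\<bar> \<partial>M))"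
      apply (subst Bochner_Integration.integral_sum)
       apply (auto intro!: Bochner_Integration.integrable_sum prod_int)[1]
      apply (intro sum.cong refl)
      apply (subst Bochner_Integration.integral_sum)
       apply (auto intro!: prod_int)
      done
    then show ?thesis by simp
  qed
  also have "\<dots> = real ?d / ((2 / pi) * (real q - 1) + 1) * (1 / real q) *
       (\<Sum>i<q. \<Sum>j<q. (norm g)\<^sup>2 * (if i = j then 1 / real ?d else 2 / (pi * real ?d)))"
    by (simp add: pair_exp)
  also have "\<dots> = (norm g)\<^sup>2"
  proof -
    have "(\<Sum>i<q. \<Sum>j<q. (norm g)\<^sup>2 * (if i = j then 1 / real ?d else 2 / (pi * real ?d)))
       = (\<Sum>i<q. (norm g)\<^sup>2 * (1 / real ?d + (real q - 1) * (2 / (pi * real ?d))))"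
      by (intro sum.cong refl) (simp add: sum_distrib_left[symmetric] sum_if_eq)
    also have "\<dots> = real q * (norm g)\<^sup>2 * (1 / real ?d + (real q - 1) * (2 / (pi * real ?d)))"
      by simp
    finally have s: "(\<Sum>i<q. \<Sum>j<q. (norm g)\<^sup>2 * (if i = j then 1 / real ?d else 2 / (pi * real ?d)))
       = real q * (norm g)\<^sup>2 * (1 / real ?d + (real q - 1) * (2 / (pi * real ?d)))" .
    have q0: "real q > 0" using q1 by simp
    have d0: "real ?d > 0" by simp
    have "0 \<le> (2 / pi) * (real q - 1)" using q1 by (intro mult_nonneg_nonneg) auto
    then have c0: "(2 / pi) * (real q - 1) + 1 > 0" by linarith
    have "1 / real ?d + (real q - 1) * (2 / (pi * real ?d)) = ((2 / pi) * (real q - 1) + 1) / real ?d"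
      using d0 by (simp add: field_simps)
    then have "real ?d / ((2 / pi) * (real q - 1) + 1) * (1 / real q) *
       (\<Sum>i<q. \<Sum>j<q. (norm g)\<^sup>2 * (if i = j then 1 / real ?d else 2 / (pi * real ?d)))
      = real ?d / ((2 / pi) * (real q - 1) + 1) * (1 / real q) *
        (real q * (norm g)\<^sup>2 * (((2 / pi) * (real q - 1) + 1) / real ?d))"
      unfolding s by simp
    also have "\<dots> = (norm g)\<^sup>2"
      using cancel_lemma[of "real ?d" "(2 / pi) * (real q - 1) + 1" "real q" "(norm g)\<^sup>2"] q0 d0 c0 by simp
    finally show ?thesis .
  qed
  finally have gm: "g \<bullet> m = (norm g)\<^sup>2" .
  have "\<mu> = 1"
  proof -
    have "g \<bullet> m = \<mu> * (g \<bullet> g)" by (simp add: mg)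
    with gm have "\<mu> * (g \<bullet> g) = g \<bullet> g" by (simp add: power2_norm_eq_inner)
    with gg show ?thesis by simp
  qed
  then have "m = g" using mg by simp
  moreover have hb: "has_bochner_integral M F m" unfolding m_def by (rule has_bochner_integral_integrable[OF Fi])
  ultimately have "has_bochner_integral M F g" by simp
  then show ?thesis by (simp only: F_def[abs_def])
qed

end


theorem mainTheorem3:
  fixes M :: "'s measure" and W :: "nat \<Rightarrow> 's \<Rightarrow> real ^ 'n"
    and g :: "real ^ 'n" and q :: nat
  assumes "prob_space M"
    and "1 \<le> q" and "q \<le> CARD('n)"
    and "g \<noteq> 0"
    and "prob_space.indep_vars M (\<lambda>_. borel) W {0..<q}"
    and "\<And>i. i < q \<Longrightarrow> distr M borel (W i) = unif_sphere"
  shows "has_bochner_integral M (\<lambda>\<omega>. g2_est CARD('n) q g (\<lambda>i. W i \<omega>)) g"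
proof -
  have S: "setting M W q"
    unfolding setting_def using assms(1,2,3,5,6) by blast
  interpret setting M W q by (rule S)
  show ?thesis by (rule main_result[OF assms(4)])
qed

end
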